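(* In Setting B (below), suppose the initial output satisfies $\underline y(0)<y(0)<\overline y(0)$ (equivalently $-\alpha(0)<\varphi_1(0)<\beta(0)$) and $u(0)=0$. Then along the closed-loop solution $$\frac{d}{dt}\mathcal{W}_{n+1}\le -\frac{k_1\zeta^{2r}}{1-\zeta^{2r}}-\sum_{j=2}^{n}k_j\varphi_j^2-k_{n+1}\varrho^2,$$ and $(\varphi_1(t),\dots,\varphi_n(t),\varrho(t))\to0$ as $t\to\infty$; i.e. the closed-loop error dynamics are (semi-globally, for all initial outputs in the constraint set) asymptotically stable.
   Context: Setting B. Let $n\ge2$. Plant: $\dot x_i=f_i(\bar x_i)+g_i(\bar x_i)x_{i+1}$ ($i=1,\dots,n-1$), $\dot x_n=f_n(\bar x_n)+g_n(\bar x_n)u$, $y=x_1$, $\bar x_i=(x_1,\dots,x_i)$, $f_i,g_i:\mathbb{R}^i\to\mathbb{R}$ smooth, with constants $0<\underline g_i\le\bar g_i$ such that $\underline g_i\le|g_i(\bar x_i)|\le\bar g_i$. Input $u$ generated by the saturation model $\dot u=p_1G(u)u_c-p_1p_2u$, $u(0)=0$, with $u_{\min}<0<u_{\max}$, $p_1,p_2>0$, $\gamma$ an even positive integer, $G(u)=\rho(u)[1-(u/u_{\max})^\gamma]+(1-\rho(u))[1-(u/u_{\min})^\gamma]$, $\rho(u)=1$ if $u>0$, $0$ otherwise. Output constraints: continuous $\underline y(t)<\overline y(t)$ with $\underline y,\overline y$ and their derivatives up to order $n+1$ bounded. Reference $y_d$ with derivatives up to order $n+1$ bounded and with $\underline y(t)<y_d(t)<\overline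 y(t)$; set $\alpha(t)=y_d(t)-\underline y(t)$, $\beta(t)=\overline y(t)-y_d(t)$ and assume there are constants $0<\underline\alpha\le\alpha(t)\le\overline\alpha$, $0<\underline\beta\le\beta(t)\le\overline\beta$ for all $t\ge0$. Fix $r\in\mathbb{N}$ with $2r\ge n$, gains $k_1,\dots,k_{n+1}>0$, $\delta>0$. Error coordinates: $\varphi_1=y-y_d$, $\varphi_i=x_i-\eta_{i-1}$ ($i=2,\dots,n$), $\varrho=u-\eta_n$. Let $s=1$ if $\varphi_1>0$ and $s=0$ otherwise; $\zeta=s\varphi_1/\beta+(1-s)\varphi_1/\alpha$; $\digamma=\frac{s}{\beta^{2r}-\varphi_1^{2r}}+\frac{1-s}{\alpha^{2r}-\varphi_1^{2r}}$. Stabilizing functions: $\eta_1=\frac{1}{g_1(x_1)}[\dot y_d-f_1(x_1)-(k_1+\overline k_1(t))\varphi_1]$ with $\overline k_1(t)=\sqrt{(\dot\alpha/\alpha)^2+(\dot\beta/\beta)^2+\delta}$; for $i=2,\dots,n$, $\eta_i=\frac{1}{g_i(\bar x_i)}[\dot\eta_{i-1}-f_i(\bar x_i)-c_i-k_i\varphi_i]$ where $c_2=\digamma g_1(x_1)\varphi_1^{2r-1}$ and $c_i=g_{i-1}(\bar x_{i-1})\varphi_{i-1}$ for $i\ge3$, and $\dot\eta_{i-1}$ is the total time derivative of $\eta_{i-1}$ along the dynamics. Commanded input: $u_c=\frac{p_1p_2u+\dot\eta_n-g_n(\bar x_n)\varphi_n-k_{n+1}\varrho}{p_1G(u)}$.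 Barrier Lyapunov function: $\mathcal{W}_1=\frac{1}{2r}\ln\frac{1}{1-\zeta^{2r}}$ (equivalently $\frac{s}{2r}\ln\frac{\beta^{2r}}{\beta^{2r}-\varphi_1^{2r}}+\frac{1-s}{2r}\ln\frac{\alpha^{2r}}{\alpha^{2r}-\varphi_1^{2r}}$), and $\mathcal{W}_{n+1}=\mathcal{W}_1+\tfrac12\sum_{j=2}^n\varphi_j^2+\tfrac12\varrho^2$. *)

theory Defs
  imports "HOL-Analysis.Analysis"
begin

text \<open>A state is a vector indexed by nat; only coordinates 1..m matter for a function of
  \<open>(x_1,...,x_m)\<close>. Smoothness (C-infinity on R^m) is defined by hand via partial derivatives.\<close>

definition agree_out :: "nat \<Rightarrow> (nat \<Rightarrow> real) \<Rightarrow> (nat \<Rightarrow> real) \<Rightarrow> bool" where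
  "agree_out m x y \<longleftrightarrow> (\<forall>j. j \<notin> {1..m} \<longrightarrow> x j = y j)"

definition dist_m :: "nat \<Rightarrow> (nat \<Rightarrow> real) \<Rightarrow> (nat \<Rightarrow> real) \<Rightarrow> real" where
  "dist_m m x y = sqrt (\<Sum>j=1..m. (x j - y j)^2)"

definition cont_in :: "nat \<Rightarrow> ((nat \<Rightarrow> real) \<Rightarrow> real) \<Rightarrow> bool" where
  "cont_in m F \<longleftrightarrow> (\<forall>x. \<forall>\<epsilon>>0. \<exists>\<delta>>0. \<forall>y. agree_out m x y \<and> dist_m m x y < \<delta> \<longrightarrow> \<bar>F y - F x\<bar> < \<epsilon>)"

definition grad_at :: "nat \<Rightarrow> ((nat \<Rightarrow> real) \<Rightarrow> real) \<Rightarrow> (nat \<Rightarrow> real) \<Rightarrow> (nat \<Rightarrow> real) \<Rightarrow> bool" where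
  "grad_at m F D x \<longleftrightarrow> (\<forall>\<epsilon>>0. \<exists>\<delta>>0. \<forall>y. agree_out m x y \<and> dist_m m x y < \<delta> \<longrightarrow>
      \<bar>F y - F x - (\<Sum>j=1..m. D j * (y j - x j))\<bar> \<le> \<epsilon> * dist_m m x y)"

fun Ck :: "nat \<Rightarrow> nat \<Rightarrow> ((nat \<Rightarrow> real) \<Rightarrow> real) \<Rightarrow> bool" where
  "Ck m 0 F = cont_in m F"
| "Ck m (Suc k) F = (\<exists>D :: nat \<Rightarrow> (nat \<Rightarrow> real) \<Rightarrow> real.
      (\<forall>x. grad_at m F (\<lambda>j. D j x) x) \<and> (\<forall>j\<in>{1..m}. Ck m k (D j)))"

definition smooth_fun :: "nat \<Rightarrow> ((nat \<Rightarrow> real) \<Rightarrow> real) \<Rightarrow> bool" where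
  "smooth_fun m F \<longleftrightarrow> (\<forall>x y. (\<forall>j\<in>{1..m}. x j = y j) \<longrightarrow> F x = F y) \<and> (\<forall>k. Ck m k F)"

definition tder :: "(real \<Rightarrow> real) \<Rightarrow> real \<Rightarrow> real" where
  "tder h t = vector_derivative h (at t within {0..})"

definition bdd_derivs :: "nat \<Rightarrow> (real \<Rightarrow> real) \<Rightarrow> bool" where
  "bdd_derivs N h \<longleftrightarrow> (\<exists>D :: nat \<Rightarrow> real \<Rightarrow> real. D 0 = h \<and>
      (\<forall>m<N. \<forall>t\<ge>0. (D m has_real_derivative D (Suc m) t) (at t within {0..})) \<and>
      (\<forall>m\<le>N. \<exists>B. \<forall>t\<ge>0. \<bar>D m t\<bar> \<le> B))"

definition satG :: "real \<Rightarrow> real \<Rightarrow> nat \<Rightarrow> real \<Rightarrow> real" where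
  "satG umin umax \<gamma> u =
     (let \<rho> = (if u > 0 then 1 else 0 :: real)
      in \<rho> * (1 - (u / umax)^\<gamma>) + (1 - \<rho>) * (1 - (u / umin)^\<gamma>))"

text \<open>\<open>\<zeta>\<close> and \<open>\<digamma>\<close> as functions of \<open>\<alpha>, \<beta>, \<phi>\<^sub>1\<close> (s = 1 iff \<open>\<phi>\<^sub>1 > 0\<close>).\<close>
definition zeta :: "real \<Rightarrow> real \<Rightarrow> real \<Rightarrow> real" where
  "zeta a b p = (let s = (if p > 0 then 1 else 0 :: real) in s * p / b + (1 - s) * p / a)"

definition digam :: "nat \<Rightarrow> real \<Rightarrow> real \<Rightarrow> real \<Rightarrow> real" where
  "digam r a b p = (let s = (if p > 0 then 1 else 0 :: real) in
      s / (b^(2*r) - p^(2*r)) + (1 - s) / (a^(2*r) - p^(2*r)))"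

text \<open>Convention: \<open>eta 0 = y_d\<close>, so that
  \<open>\<phi>\<^sub>j(t) = x_j(t) - eta (j-1) t\<close> for all j = 1..n. The derivative \<open>\<dot>\<eta>\<^sub>i\<^sub>-\<^sub>1\<close> (the total time derivative
  along the dynamics) is the time derivative of \<open>t \<mapsto> \<eta>\<^sub>i\<^sub>-\<^sub>1(t)\<close> along the solution.\<close>
fun eta :: "(nat \<Rightarrow> (nat \<Rightarrow> real) \<Rightarrow> real) \<Rightarrow> (nat \<Rightarrow> (nat \<Rightarrow> real) \<Rightarrow> real) \<Rightarrow> (nat \<Rightarrow> real) \<Rightarrow>
    nat \<Rightarrow> real \<Rightarrow> (real \<Rightarrow> real) \<Rightarrow> (real \<Rightarrow> real) \<Rightarrow> (real \<Rightarrow> real) \<Rightarrow> (real \<Rightarrow> nat \<Rightarrow> real) \<Rightarrow>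
    nat \<Rightarrow> real \<Rightarrow> real" where
  "eta f g k r \<delta> yd ylo yhi x 0 = yd"
| "eta f g k r \<delta> yd ylo yhi x (Suc 0) = (\<lambda>t.
     (let \<alpha> = (\<lambda>s. yd s - ylo s); \<beta> = (\<lambda>s. yhi s - yd s); \<phi>1 = x t 1 - yd t;
          kbar = sqrt ((tder \<alpha> t / \<alpha> t)^2 + (tder \<beta> t / \<beta> t)^2 + \<delta>)
      in (1 / g 1 (x t)) * (tder yd t - f 1 (x t) - (k 1 + kbar) * \<phi>1)))"
| "eta f g k r \<delta> yd ylo yhi x (Suc (Suc i)) = (\<lambda>t.
     (let j = Suc (Suc i);
          \<phi> = x t j - eta f g k r \<delta> yd ylo yhi x (Suc i) t;
          \<phi>prev = x t (Suc i) - eta f g k r \<delta> yd ylo yhi x i t;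
          c = (if i = 0 then digam r (yd t - ylo t) (yhi t - yd t) \<phi>prev * g 1 (x t) * \<phi>prev^(2*r - 1)
               else g (Suc i) (x t) * \<phi>prev)
      in (1 / g j (x t)) * (tder (eta f g k r \<delta> yd ylo yhi x (Suc i)) t - f j (x t) - c - k j * \<phi>)))"

end

theory Submission
  imports Defs
begin


lemma at_within_Ici_nontriv: "t \<ge> (0::real) \<Longrightarrow> at t within {0..} \<noteq> bot"
  apply (auto simp: trivial_limit_within islimpt_approachable)
  subgoal for e apply (rule bexI[where x="t + e/2"]) by (auto simp: dist_real_def) done

lemma tder_eq:
  assumes "t \<ge> 0" "(h has_real_derivative D) (at t within {0..})"
  shows "tder h t = D"
  unfolding tder_def
  using vector_derivative_within[OF at_within_Ici_nontriv[OF assms(1)]] assms(2)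
  by (simp add: has_real_derivative_iff_has_vector_derivative)

lemma deriv_Ici_at:
  assumes "t > (0::real)" "(h has_real_derivative D) (at t within {0..})"
  shows "(h has_real_derivative D) (at t)"
proof -
  have "t \<in> interior {0..}" using assms by simp
  then show ?thesis using assms(2) at_within_interior by metis
qed

lemma lin_decrease:
  fixes W Wd :: "real \<Rightarrow> real"
  assumes "0 \<le> a" "a \<le> b"
    and d: "\<And>t. a \<le> t \<Longrightarrow> t \<le> b \<Longrightarrow> (W has_real_derivative Wd t) (at t within {0..})"
    and le: "\<And>t. a \<le> t \<Longrightarrow> t \<le> b \<Longrightarrow> Wd t \<le> - c"
  shows "W b \<le> W a - c * (b - a)"
proof -
  let ?V = "\<lambda>t. W t + c * t"
  have "?V a \<ge> ?V b"
  proof (rule DERIV_nonpos_imp_decreasing_open[OF \<open>a \<le> b\<close>])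
    fix t assume t: "a < t" "t < b"
    have "(W has_real_derivative Wd t) (at t)"
      using deriv_Ici_at[OF _ d] t assms by simp
    then have "(?V has_real_derivative Wd t + c) (at t)"
      by (auto intro!: derivative_eq_intros)
    then show "\<exists>y. (?V has_real_derivative y) (at t) \<and> y \<le> 0"
      using le[of t] t by force
  next
    have "\<And>t. t \<in> {a..b} \<Longrightarrow> (?V has_real_derivative Wd t + c) (at t within {a..b})"
    proof -
      fix t assume t: "t \<in> {a..b}"
      have "(W has_real_derivative Wd t) (at t within {a..b})"
        using DERIV_subset[OF d[of t]] t assms by auto
      then show "(?V has_real_derivative Wd t + c) (at t within {a..b})"
        by (auto intro!: derivative_eq_intros)
    qed
    then show "continuous_on {a..b} ?V" by (rule DERIV_continuous_on)
  qed
  then show ?thesis by (simp add: algebra_simps)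
qed

lemma lipschitz_Ici:
  fixes h h' :: "real \<Rightarrow> real"
  assumes d: "\<And>t. t \<ge> 0 \<Longrightarrow> (h has_real_derivative h' t) (at t within {0..})"
    and B: "\<And>t. t \<ge> 0 \<Longrightarrow> \<bar>h' t\<bar> \<le> B"
    and "s \<ge> 0" "t \<ge> 0"
  shows "\<bar>h s - h t\<bar> \<le> B * \<bar>s - t\<bar>"
proof -
  have "norm (h s - h t) \<le> B * norm (s - t)"
  proof (rule differentiable_bound[of "{0..}" h "\<lambda>t. (*) (h' t)"])
    show "convex {0::real..}" by simp
    show "\<And>x. x \<in> {0..} \<Longrightarrow> (h has_derivative (*) (h' x)) (at x within {0..})"
      using d by (simp add: has_field_derivative_def)
    show "\<And>x. x \<in> {0..} \<Longrightarrow> onorm ((*) (h' x)) \<le> B"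
      using B by (intro onorm_bound) (auto simp: abs_mult intro!: mult_right_mono order_trans[OF abs_ge_zero B])
  qed (use assms in auto)
  then show ?thesis by simp
qed

lemma closure_le:
  fixes h :: "real \<Rightarrow> real"
  assumes c: "continuous_on {0..} h" and T: "T > 0" and le: "\<And>s. 0 \<le> s \<Longrightarrow> s < T \<Longrightarrow> h s \<le> 0"
  shows "h T \<le> 0"
proof -
  have cl: "closed {s \<in> {0..}. h s \<le> (\<lambda>_. 0) s}"
    by (rule continuous_on_closed_Collect_le[OF c]) auto
  have "{0..<T} \<subseteq> {s \<in> {0..}. h s \<le> 0}" using le by auto
  then have "closure {0..<T} \<subseteq> {s \<in> {0..}. h s \<le> 0}"
    using cl by (intro closure_minimal) auto
  moreover have "T \<in> closure {0..<T}" using T closure_atLeastLessThan[OF T] by simp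
  ultimately have "T \<in> {s \<in> {0..}. h s \<le> 0}" by (rule subsetD)
  then show ?thesis by simp
qed

lemma stay_below:
  fixes u :: "real \<Rightarrow> real"
  assumes c: "continuous_on {0..} u" and u0: "u 0 < M"
    and D: "\<And>t. t \<ge> 0 \<Longrightarrow> u t = M \<Longrightarrow> \<exists>D<0. (u has_real_derivative D) (at t within {0..})"
  shows "\<forall>t\<ge>0. u t < M"
proof (rule ccontr)
  assume neg: "\<not> (\<forall>t\<ge>0. u t < M)"
  define T where "T = {t \<in> {0..}. (\<lambda>_. M) t \<le> u t}"
  have ne: "T \<noteq> {}" using neg by (auto simp: T_def not_less)
  have cl: "closed T" unfolding T_def
    by (rule continuous_on_closed_Collect_le[OF _ c]) auto
  have bb: "bdd_below T" unfolding T_def by (auto intro: bdd_belowI[of _ 0])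
  define ts where "ts = Inf T"
  have tsT: "ts \<in> T" using closed_contains_Inf[OF ne bb cl] ts_def by simp
  have below: "\<And>s. 0 \<le> s \<Longrightarrow> s < ts \<Longrightarrow> u s < M"
  proof -
    fix s assume "0 \<le> s" "s < ts"
    then have "s \<notin> T" using cInf_lower[OF _ bb] ts_def by force
    then show "u s < M" using \<open>0 \<le> s\<close> by (auto simp: T_def)
  qed
  have ts0: "ts > 0" using tsT u0 by (auto simp: T_def) (metis antisym_conv2 not_le)
  have "u ts - M \<le> 0"
    by (rule closure_le[OF _ ts0]) (use c below in \<open>auto intro!: continuous_intros less_imp_le\<close>)
  then have uts: "u ts = M" using tsT by (auto simp: T_def)
  obtain Dv where "Dv < 0" and Dv: "(u has_real_derivative Dv) (at ts within {0..})"
    using D[OF _ uts] ts0 by auto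
  obtain d where "d > 0" and d: "\<And>h. h > 0 \<Longrightarrow> ts - h \<in> {0..} \<Longrightarrow> h < d \<Longrightarrow> u ts < u (ts - h)"
    using has_real_derivative_neg_dec_left[OF Dv \<open>Dv < 0\<close>] by blast
  define h where "h = min (d/2) ts"
  have "u ts < u (ts - h)" using d[of h] \<open>d > 0\<close> ts0 by (auto simp: h_def)
  moreover have "u (ts - h) < M" using below[of "ts - h"] \<open>d > 0\<close> ts0 by (auto simp: h_def)
  ultimately show False using uts by simp
qed

lemma telescope:
  fixes Q :: "nat \<Rightarrow> real"
  assumes "2 \<le> n"
  shows "(\<Sum>j=2..n. Q j - (if j = 2 then A else Q (j-1))) = Q n - A"
  using assms
proof (induction n rule: dec_induct)
  case base then show ?case by simp
next
  case (step m)
  then show ?case by simp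
qed

lemma barbalat:
  fixes W Wd v :: "real \<Rightarrow> real"
  assumes d: "\<And>t. t \<ge> 0 \<Longrightarrow> (W has_real_derivative Wd t) (at t within {0..})"
    and le: "\<And>t. t \<ge> 0 \<Longrightarrow> Wd t \<le> - c * (v t)^(2*m)"
    and c: "c > 0"
    and pos: "\<And>t. t \<ge> 0 \<Longrightarrow> W t \<ge> 0"
    and L: "\<And>s t. s \<ge> 0 \<Longrightarrow> t \<ge> 0 \<Longrightarrow> \<bar>v s - v t\<bar> \<le> L * \<bar>s - t\<bar>"
  shows "(v \<longlongrightarrow> 0) at_top"
proof (rule tendstoI)
  fix \<epsilon> :: real assume e: "\<epsilon> > 0"
  have Wd0: "\<And>t. t \<ge> 0 \<Longrightarrow> Wd t \<le> 0"
  proof -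
    fix t :: real assume "t \<ge> 0"
    have "0 \<le> c * (v t)^(2*m)" using c by (simp add: power_mult)
    then show "Wd t \<le> 0" using le[OF \<open>t \<ge> 0\<close>] by linarith
  qed
  have mono: "\<And>a b. 0 \<le> a \<Longrightarrow> a \<le> b \<Longrightarrow> W b \<le> W a"
    using lin_decrease[of _ _ W Wd 0] d Wd0 by force
  show "eventually (\<lambda>t. dist (v t) 0 < \<epsilon>) at_top"
  proof (rule ccontr)
    assume neg: "\<not> eventually (\<lambda>t. dist (v t) 0 < \<epsilon>) at_top"
    then have freq: "\<And>T. \<exists>t\<ge>T. \<bar>v t\<bar> \<ge> \<epsilon>"
      by (auto simp: eventually_at_top_linorder not_less)
    define h where "h = \<epsilon> / (2 * (\<bar>L\<bar> + 1))"
    have h: "h > 0" using e by (simp add: h_def add_pos_nonneg)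
    define e2 where "e2 = c * (\<epsilon>/2)^(2*m) * h"
    have e2: "e2 > 0" using e c h by (simp add: e2_def)
    have step: "\<exists>t'\<ge>T. W t' \<le> W T - e2" if "T \<ge> 0" for T
    proof -
      obtain t where t: "t \<ge> T" "\<bar>v t\<bar> \<ge> \<epsilon>" using freq by blast
      have "W (t + h) \<le> W t - c * (\<epsilon>/2)^(2*m) * ((t + h) - t)"
      proof (rule lin_decrease)
        fix s assume s: "t \<le> s" "s \<le> t + h"
        have s0: "s \<ge> 0" "t \<ge> 0" using s t that by linarith+
        have "\<bar>v s - v t\<bar> \<le> L * \<bar>s - t\<bar>" using L[OF s0] .
        also have "\<dots> \<le> \<bar>L\<bar> * \<bar>s - t\<bar>" by (simp add: mult_right_mono)
        also have "\<dots> \<le> \<bar>L\<bar> * h" using s h by (intro mult_left_mono) auto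
        also have "\<dots> \<le> \<epsilon>/2" using e by (simp add: h_def field_simps)
        finally have "\<bar>v s\<bar> \<ge> \<epsilon>/2" using t by linarith
        then have "(\<epsilon>/2)^(2*m) \<le> \<bar>v s\<bar>^(2*m)" using e by (intro power_mono) auto
        also have "\<dots> = (v s)^(2*m)" by (simp add: power_even_abs)
        finally have "c * (\<epsilon>/2)^(2*m) \<le> c * (v s)^(2*m)" using c by simp
        then show "Wd s \<le> - (c * (\<epsilon>/2)^(2*m))" using le[OF s0(1)] by linarith
      next
        show "0 \<le> t" "t \<le> t + h" using t that h by linarith+
      next
        fix s assume "t \<le> s" "s \<le> t + h"
        then show "(W has_real_derivative Wd s) (at s within {0..})" using d t that by simp
      qed
      then have "W (t + h) \<le> W t - e2" by (simp add: e2_def)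
      moreover have "W t \<le> W T" using mono t that by auto
      ultimately show ?thesis using t h by (intro exI[of _ "t + h"]) auto
    qed
    have "\<exists>T\<ge>0. W T \<le> W 0 - real N * e2" for N
    proof (induction N)
      case 0 then show ?case by auto
    next
      case (Suc N)
      then obtain T where T: "T \<ge> 0" "W T \<le> W 0 - real N * e2" by auto
      then obtain t' where "t' \<ge> T" "W t' \<le> W T - e2" using step[of T] by auto
      then show ?case using T by (intro exI[of _ t']) (auto simp: algebra_simps)
    qed
    moreover obtain N :: nat where "real N > W 0 / e2" using reals_Archimedean2 by blast
    ultimately obtain T where "T \<ge> 0" "W T \<le> W 0 - real N * e2" by blast
    moreover have "real N * e2 > W 0" using \<open>real N > W 0 / e2\<close> e2 by (simp add: field_simps)
    ultimately show False using pos[of T] by linarith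
  qed
qed

lemma ln_deriv:
  assumes "(Z has_real_derivative Zd) (at t within S)" "Z t < 1"
  shows "((\<lambda>s. c * ln (1 / (1 - Z s))) has_real_derivative c * (Zd / (1 - Z t))) (at t within S)"
proof -
  have ne: "1 + Z t * Z t - Z t * 2 \<noteq> 0"
  proof -
    have "1 + Z t * Z t - Z t * 2 = (1 - Z t)^2" by (simp add: power2_eq_square algebra_simps)
    then show ?thesis using assms(2) by simp
  qed
  show ?thesis using assms ne by (auto intro!: derivative_eq_intros simp: field_simps)
qed

lemma zeta_cases: "zeta a b p = (if p > 0 then p / b else p / a)"
  by (simp add: zeta_def Let_def)

lemma digam_cases: "digam r a b p = (if p > 0 then 1 / (b^(2*r) - p^(2*r)) else 1 / (a^(2*r) - p^(2*r)))"
  by (simp add: digam_def Let_def)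

lemma side_case:
  fixes p cf Z :: "real \<Rightarrow> real"
  assumes dp: "(p has_real_derivative p') (at t within S)"
    and dc: "(cf has_real_derivative c') (at t within S)"
    and cpos: "cf t > 0" and lt: "\<bar>p t\<bar> < cf t" and N: "N = 2*r" "r \<ge> 1"
    and ev: "eventually (\<lambda>s. Z s = (p s / cf s)^N) (at t within S)"
    and Zt: "Z t = (p t / cf t)^N"
    and pd: "p' = G - (k1 + kb) * p t" and kb: "kb \<ge> \<bar>c' / cf t\<bar>"
  shows "\<exists>D. ((\<lambda>s. 1/(2*real r) * ln (1/(1 - Z s))) has_real_derivative D) (at t within S)
           \<and> D \<le> 1 / (cf t ^ N - p t ^ N) * G * p t ^ (N - 1) - k1 * Z t / (1 - Z t)"
proof -
  define qt where "qt = p t / cf t"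
  define qd where "qd = (p' * cf t - p t * c') / (cf t * cf t)"
  have dq: "((\<lambda>s. p s / cf s) has_real_derivative qd) (at t within S)"
    unfolding qd_def using DERIV_divide[OF dp dc] cpos by simp
  have dqN: "((\<lambda>s. (p s / cf s)^N) has_real_derivative real N * qt^(N-1) * qd) (at t within S)"
    using DERIV_power[OF dq, of N] by (simp add: qt_def ac_simps)
  have dZ: "(Z has_real_derivative real N * qt^(N-1) * qd) (at t within S)"
    using dqN has_field_derivative_cong_eventually[OF ev Zt] by simp
  have aq: "\<bar>qt\<bar> < 1" using lt cpos by (simp add: qt_def abs_div)
  have evN: "even N" using N by simp
  have qN: "qt^N < 1"
  proof -
    have "qt^N = \<bar>qt\<bar>^N" using evN by (simp add: power_even_abs)
    also have "\<dots> < 1" using aq N by (simp add: power_less_one_iff)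
    finally show ?thesis .
  qed
  have qN0: "qt^N \<ge> 0" using evN by (simp add: zero_le_even_power)
  have Zt': "Z t = qt^N" using Zt qt_def by simp
  define D where "D = 1/(2*real r) * (real N * qt^(N-1) * qd / (1 - Z t))"
  have dW: "((\<lambda>s. 1/(2*real r) * ln (1/(1 - Z s))) has_real_derivative D) (at t within S)"
    unfolding D_def by (rule ln_deriv[OF dZ]) (simp add: Zt' qN)
  define M where "M = N - 1"
  have M: "N = Suc M" using N by (simp add: M_def)
  have pt: "p t = qt * cf t" using cpos by (simp add: qt_def)
  define A where "A = 1 - qt^N"
  have A: "A > 0" using qN by (simp add: A_def)
  have D2: "D = (qt^M * G / cf t - (k1 + kb + c' / cf t) * qt^N) / A"
  proof -
    have e1: "real N = 2 * real r" using N by simp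
    have e2: "qt^N = qt^M * qt" using M by simp
    have e3: "N - 1 = M" using M by simp
    have r0: "real r > 0" using N by simp
    have A': "1 - qt^M * qt > 0" using A e2 by (simp add: A_def)
    have "cf t - cf t * (qt^M * qt) > 0" using A' cpos
      by (metis mult.right_neutral mult_pos_pos right_diff_distrib)
    then show ?thesis unfolding D_def Zt' A_def qd_def pd pt e2 e3 e1
      using r0 A' cpos by (simp add: field_simps)
  qed
  have T2: "1 / (cf t ^ N - p t ^ N) * G * p t ^ (N - 1) - k1 * Z t / (1 - Z t)
        = qt^M * G / (cf t * A) - k1 * qt^N / A"
  proof -
    have f1: "cf t ^ N - p t ^ N = cf t ^ M * (cf t * A)"
      unfolding pt A_def M by (simp add: power_mult_distrib algebra_simps)
    have f2: "p t ^ (N - 1) = qt^M * cf t^M" unfolding pt M by (simp add: power_mult_distrib)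
    have f3: "cf t ^ M > 0" using cpos by simp
    have "1 / (cf t ^ N - p t ^ N) * G * p t ^ (N - 1) = qt^M * G / (cf t * A)"
      unfolding f1 f2 using f3 A cpos by (simp add: field_simps)
    moreover have "k1 * Z t / (1 - Z t) = k1 * qt^N / A" unfolding Zt' A_def ..
    ultimately show ?thesis by simp
  qed
  have kb2: "kb + c' / cf t \<ge> 0" using kb by linarith
  have "D - (qt^M * G / (cf t * A) - k1 * qt^N / A) = - ((kb + c' / cf t) * qt^N) / A"
    unfolding D2 using A cpos by (simp add: field_simps)
  also have "\<dots> \<le> 0" using A kb2 qN0 by (simp add: divide_nonpos_pos)
  finally have "D \<le> 1 / (cf t ^ N - p t ^ N) * G * p t ^ (N - 1) - k1 * Z t / (1 - Z t)"
    unfolding T2 by simp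
  then show ?thesis using dW by blast
qed

lemma zero_case:
  fixes p a b :: "real \<Rightarrow> real"
  assumes dp: "(p has_real_derivative p') (at t within S)"
    and da: "(a has_real_derivative a') (at t within S)"
    and db: "(b has_real_derivative b') (at t within S)"
    and apos: "a t > 0" and bpos: "b t > 0" and p0: "p t = 0" and N: "N = 2*r" "r \<ge> 1"
  shows "((\<lambda>s. zeta (a s) (b s) (p s) ^ N) has_real_derivative 0) (at t within S)"
proof -
  let ?Z = "\<lambda>s. zeta (a s) (b s) (p s) ^ N"
  let ?H = "\<lambda>s. (p s / b s)^N + (p s / a s)^N"
  have evN: "even N" using N by simp
  have N1: "N - 1 \<noteq> 0" using N by simp
  have dH: "(?H has_real_derivative 0) (at t within S)"
    using DERIV_add[OF DERIV_power[OF DERIV_divide[OF dp db]] DERIV_power[OF DERIV_divide[OF dp da]], of N N]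
      apos bpos p0 N1 by (simp add: power_0_left)
  have Zt: "?Z t = 0" using p0 N by (simp add: zeta_cases)
  have Ht: "?H t = 0" using p0 N by simp
  have ZH: "0 \<le> ?Z s \<and> ?Z s \<le> ?H s" for s
  proof -
    have h1: "0 \<le> (p s / b s)^N" "0 \<le> (p s / a s)^N" using evN by (auto simp: zero_le_even_power)
    show ?thesis using h1 evN by (auto simp: zeta_cases zero_le_even_power)
  qed
  have "((\<lambda>s. (?H s - ?H t) / (s - t)) \<longlongrightarrow> 0) (at t within S)"
    using dH by (simp add: has_field_derivative_iff)
  then have lim: "((\<lambda>s. \<bar>(?H s - ?H t) / (s - t)\<bar>) \<longlongrightarrow> 0) (at t within S)"
    by (rule tendsto_rabs_zero)
  have "((\<lambda>s. (?Z s - ?Z t) / (s - t)) \<longlongrightarrow> 0) (at t within S)"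
  proof (rule Lim_null_comparison[OF _ lim], rule always_eventually, rule allI)
    fix s
    show "norm ((?Z s - ?Z t) / (s - t)) \<le> \<bar>(?H s - ?H t) / (s - t)\<bar>"
      unfolding Zt Ht using ZH[of s] by (simp add: abs_div divide_right_mono)
  qed
  then show ?thesis by (simp add: has_field_derivative_iff)
qed

lemma W1_deriv:
  fixes p a b :: "real \<Rightarrow> real"
  assumes dp: "(p has_real_derivative p') (at t within S)"
    and da: "(a has_real_derivative a') (at t within S)"
    and db: "(b has_real_derivative b') (at t within S)"
    and apos: "a t > 0" and bpos: "b t > 0" and inside: "- a t < p t" "p t < b t" and r: "r \<ge> 1"
    and pd: "p' = G - (k1 + kb) * p t" and kba: "kb \<ge> \<bar>a' / a t\<bar>" and kbb: "kb \<ge> \<bar>b' / b t\<bar>"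
  shows "\<exists>D. ((\<lambda>s. 1/(2*real r) * ln (1/(1 - zeta (a s) (b s) (p s) ^ (2*r)))) has_real_derivative D) (at t within S)
           \<and> D \<le> digam r (a t) (b t) (p t) * G * p t ^ (2*r - 1)
                  - k1 * zeta (a t) (b t) (p t) ^ (2*r) / (1 - zeta (a t) (b t) (p t) ^ (2*r))"
proof -
  let ?Z = "\<lambda>s. zeta (a s) (b s) (p s) ^ (2*r)"
  have tp: "(p \<longlongrightarrow> p t) (at t within S)"
    using DERIV_continuous[OF dp] by (simp add: continuous_within)
  consider "p t > 0" | "p t < 0" | "p t = 0" by linarith
  then show ?thesis
  proof cases
    case 1
    have ev: "eventually (\<lambda>s. ?Z s = (p s / b s)^(2*r)) (at t within S)"
      using order_tendstoD(1)[OF tp 1] by eventually_elim (simp add: zeta_cases)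
    have "\<exists>D. ((\<lambda>s. 1/(2*real r) * ln (1/(1 - ?Z s))) has_real_derivative D) (at t within S)
           \<and> D \<le> 1 / (b t ^ (2*r) - p t ^ (2*r)) * G * p t ^ (2*r - 1) - k1 * ?Z t / (1 - ?Z t)"
      by (rule side_case[OF dp db bpos _ refl r ev _ pd kbb]) (use 1 inside in \<open>auto simp: zeta_cases\<close>)
    then show ?thesis using 1 by (simp add: digam_cases)
  next
    case 2
    have ev: "eventually (\<lambda>s. ?Z s = (p s / a s)^(2*r)) (at t within S)"
      using order_tendstoD(2)[OF tp 2] by eventually_elim (simp add: zeta_cases)
    have "\<exists>D. ((\<lambda>s. 1/(2*real r) * ln (1/(1 - ?Z s))) has_real_derivative D) (at t within S)
           \<and> D \<le> 1 / (a t ^ (2*r) - p t ^ (2*r)) * G * p t ^ (2*r - 1) - k1 * ?Z t / (1 - ?Z t)"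
      by (rule side_case[OF dp da apos _ refl r ev _ pd kba]) (use 2 inside in \<open>auto simp: zeta_cases\<close>)
    then show ?thesis using 2 by (simp add: digam_cases)
  next
    case 3
    have dZ: "(?Z has_real_derivative 0) (at t within S)"
      by (rule zero_case[OF dp da db apos bpos 3 refl r])
    have Zt: "?Z t = 0" using 3 r by (simp add: zeta_cases)
    have "((\<lambda>s. 1/(2*real r) * ln (1/(1 - ?Z s))) has_real_derivative 1/(2*real r) * (0 / (1 - ?Z t))) (at t within S)"
      by (rule ln_deriv[OF dZ]) (simp add: Zt)
    moreover have "2 * r - 1 \<noteq> 0" using r by simp
    moreover have z1: "(0::real)^(2*r) = 0" "(0::real)^(2*r-Suc 0) = 0" using r by (simp_all add: power_0_left)
    ultimately show ?thesis using 3 Zt by (intro exI[of _ 0]) (simp add: z1)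
  qed
qed

definition bd :: "(real \<Rightarrow> real) \<Rightarrow> bool" where
  "bd h \<longleftrightarrow> (\<exists>B. \<forall>t\<ge>0. \<bar>h t\<bar> \<le> B)"

lemma bd_const[intro]: "bd (\<lambda>t. c)" by (auto simp: bd_def)

lemma bd_add[intro]: "bd f \<Longrightarrow> bd g \<Longrightarrow> bd (\<lambda>t. f t + g t)"
  unfolding bd_def by (metis abs_triangle_ineq add_mono order_trans)

lemma bd_minus[intro]: "bd f \<Longrightarrow> bd (\<lambda>t. - f t)"
  unfolding bd_def by simp

lemma bd_diff[intro]: "bd f \<Longrightarrow> bd g \<Longrightarrow> bd (\<lambda>t. f t - g t)"
  using bd_add[of f "\<lambda>t. - g t"] bd_minus[of g] by simp

lemma bd_mult[intro]: "bd f \<Longrightarrow> bd g \<Longrightarrow> bd (\<lambda>t. f t * g t)"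
proof -
  assume "bd f" "bd g"
  then obtain A B where A: "\<forall>t\<ge>0. \<bar>f t\<bar> \<le> A" and B: "\<forall>t\<ge>0. \<bar>g t\<bar> \<le> B" by (auto simp: bd_def)
  have "\<bar>f t * g t\<bar> \<le> A * B" if "t \<ge> 0" for t
    using A B that by (simp add: abs_mult mult_mono')
  then show ?thesis by (auto simp: bd_def)
qed

lemma bd_power[intro]: "bd f \<Longrightarrow> bd (\<lambda>t. f t ^ m)"
  by (induction m) auto

lemma bd_lip:
  assumes d: "\<And>t. t \<ge> 0 \<Longrightarrow> (h has_real_derivative h' t) (at t within {0..})" and "bd h'"
  shows "\<exists>L. \<forall>s t. s \<ge> 0 \<longrightarrow> t \<ge> 0 \<longrightarrow> \<bar>h s - h t\<bar> \<le> L * \<bar>s - t\<bar>"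
proof -
  obtain B where "\<forall>t\<ge>0. \<bar>h' t\<bar> \<le> B" using assms(2) by (auto simp: bd_def)
  then show ?thesis using lipschitz_Ici[OF d] by blast
qed

lemma stay_pos:
  fixes m :: "real \<Rightarrow> real"
  assumes c: "continuous_on {0..} m" and m0: "m 0 > 0"
    and step: "\<And>T. T > 0 \<Longrightarrow> (\<And>s. 0 \<le> s \<Longrightarrow> s < T \<Longrightarrow> m s > 0) \<Longrightarrow> m T > 0"
  shows "\<forall>t\<ge>0. m t > 0"
proof (rule ccontr)
  assume neg: "\<not> (\<forall>t\<ge>0. m t > 0)"
  define T where "T = {t \<in> {0..}. m t \<le> (\<lambda>_. 0) t}"
  have ne: "T \<noteq> {}" using neg by (auto simp: T_def not_less)
  have cl: "closed T" unfolding T_def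
    by (rule continuous_on_closed_Collect_le[OF c]) auto
  have bb: "bdd_below T" unfolding T_def by (auto intro: bdd_belowI[of _ 0])
  define ts where "ts = Inf T"
  have tsT: "ts \<in> T" using closed_contains_Inf[OF ne bb cl] ts_def by simp
  have below: "\<And>s. 0 \<le> s \<Longrightarrow> s < ts \<Longrightarrow> m s > 0"
  proof -
    fix s assume "0 \<le> s" "s < ts"
    then have "s \<notin> T" using cInf_lower[OF _ bb] ts_def by force
    then show "m s > 0" using \<open>0 \<le> s\<close> by (auto simp: T_def)
  qed
  have ts0: "ts > 0" using tsT m0 by (auto simp: T_def) (metis antisym_conv2 not_le)
  have "m ts > 0" by (rule step[OF ts0 below])
  then show False using tsT by (auto simp: T_def)
qed

lemma satG_pos:
  assumes "umin < 0" "0 < umax" "even \<gamma>" "\<gamma> > 0" "umin < u" "u < umax"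
  shows "satG umin umax \<gamma> u > 0"
proof (cases "u > 0")
  case True
  have "\<bar>u / umax\<bar> < 1" using assms True by simp
  then have "\<bar>u / umax\<bar>^\<gamma> < 1" using assms by (simp only: power_less_one_iff; simp)
  moreover have "\<bar>u / umax\<bar>^\<gamma> = (u / umax)^\<gamma>" using assms by (simp only: power_even_abs)
  ultimately have "(u / umax)^\<gamma> < 1" by simp
  then show ?thesis using True by (simp add: satG_def)
next
  case False
  have "\<bar>u / umin\<bar> < 1" using assms False by (simp add: abs_div divide_less_eq)
  then have "\<bar>u / umin\<bar>^\<gamma> < 1" using assms by (simp only: power_less_one_iff; simp)
  moreover have "\<bar>u / umin\<bar>^\<gamma> = (u / umin)^\<gamma>" using assms by (simp only: power_even_abs)
  ultimately have "(u / umin)^\<gamma> < 1" by linarith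
  then show ?thesis using False by (simp add: satG_def)
qed

lemma satG_max: "0 < umax \<Longrightarrow> \<gamma> > 0 \<Longrightarrow> satG umin umax \<gamma> umax = 0"
  by (simp add: satG_def)

lemma satG_min: "umin < 0 \<Longrightarrow> \<gamma> > 0 \<Longrightarrow> satG umin umax \<gamma> umin = 0"
  by (simp add: satG_def)

lemma bd_sqrt[intro]: "bd f \<Longrightarrow> bd (\<lambda>t. sqrt (f t))"
proof -
  assume "bd f"
  then obtain B where B: "\<forall>t\<ge>0. \<bar>f t\<bar> \<le> B" by (auto simp: bd_def)
  have "\<bar>sqrt (f t)\<bar> \<le> 1 + B" if "t \<ge> 0" for t
  proof -
    have "\<bar>sqrt (f t)\<bar> = sqrt \<bar>f t\<bar>" by (rule real_sqrt_abs'[symmetric])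
    also have "\<dots> \<le> 1 + \<bar>f t\<bar>"
    proof (cases "\<bar>f t\<bar> \<le> 1")
      case True then have "sqrt \<bar>f t\<bar> \<le> 1" by simp
      then show ?thesis using abs_ge_zero[of "f t"] by linarith
    next
      case False
      have "\<bar>f t\<bar> * 1 \<le> \<bar>f t\<bar> * \<bar>f t\<bar>" using False by (intro mult_left_mono) auto
      then have "sqrt \<bar>f t\<bar> \<le> \<bar>f t\<bar>" by (intro real_le_lsqrt) (auto simp: power2_eq_square)
      then show ?thesis by linarith
    qed
    finally show ?thesis using B[rule_format, OF that] by linarith
  qed
  then show ?thesis by (auto simp: bd_def)
qed

lemma abs_le_sq: "\<bar>x::real\<bar> \<le> 1 + x^2"
proof (cases "\<bar>x\<bar> \<le> 1")
  case True then show ?thesis by (simp add: add_increasing2)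
next
  case False
  then have "\<bar>x\<bar> * 1 \<le> \<bar>x\<bar> * \<bar>x\<bar>" by (intro mult_left_mono) auto
  moreover have "\<bar>x\<bar> * \<bar>x\<bar> = x^2" by (metis abs_mult_self_eq power2_eq_square)
  ultimately show ?thesis by linarith
qed

lemma zeta_lt1:
  assumes "a > 0" "b > 0" "- a < p" "p < b" "r \<ge> 1"
  shows "0 \<le> zeta a b p ^ (2*r) \<and> zeta a b p ^ (2*r) < 1"
proof -
  have z: "\<bar>zeta a b p\<bar> < 1" using assms by (auto simp: zeta_cases abs_div divide_less_eq less_divide_eq)
  have "zeta a b p ^ (2*r) = \<bar>zeta a b p\<bar> ^ (2*r)" by (simp add: power_even_abs)
  moreover have "\<bar>zeta a b p\<bar> ^ (2*r) < 1" using z assms by (simp add: power_less_one_iff)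
  ultimately show ?thesis by (simp add: zero_le_even_power)
qed

lemma zeta_bound:
  assumes "a > 0" "b > 0" "- a < p" "p < b" "r \<ge> 1" "\<theta> \<ge> 0" "zeta a b p ^ (2*r) \<le> \<theta> ^ (2*r)"
  shows "p \<le> \<theta> * b \<and> - p \<le> \<theta> * a"
proof -
  have N: "2 * r = Suc (2 * r - 1)" using assms by simp
  show ?thesis
  proof (cases "p > 0")
    case True
    then have "(p / b)^(2*r) \<le> \<theta>^(2*r)" using assms by (simp add: zeta_cases)
    then have "p / b \<le> \<theta>" using assms N by (metis power_le_imp_le_base)
    then have h1: "p \<le> \<theta> * b" using assms(2) by (simp add: pos_divide_le_eq mult.commute)
    have h2: "0 \<le> \<theta> * a" using assms by simp
    show ?thesis using h1 h2 True by linarith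
  next
    case False
    then have "(p / a)^(2*r) \<le> \<theta>^(2*r)" using assms by (simp add: zeta_cases)
    moreover have "(- p / a)^(2*r) = (p / a)^(2*r)"
      by simp
    ultimately have "(- p / a)^(2*r) \<le> \<theta>^(2*r)" by simp
    then have "- p / a \<le> \<theta>" using assms N by (metis power_le_imp_le_base)
    then have h1: "- p \<le> \<theta> * a" using assms(1) pos_divide_le_eq[of a "- p" \<theta>] by (simp add: mult.commute)
    have h2: "0 \<le> \<theta> * b" using assms by simp
    show ?thesis using h1 h2 False by linarith
  qed
qed

lemma zeta_lower:
  assumes "a > 0" "b > 0" "a \<le> M" "b \<le> M" "- a < p" "p < b"
  shows "(p / M)^(2*r) \<le> zeta a b p ^ (2*r)"
proof -
  have M: "M > 0" using assms by simp
  have "\<bar>p / M\<bar> \<le> \<bar>zeta a b p\<bar>"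
  proof (cases "p > 0")
    case True
    have "\<bar>p\<bar> / M \<le> \<bar>p\<bar> / b" using assms by (intro divide_left_mono) auto
    then show ?thesis using True assms M by (simp add: zeta_cases abs_div)
  next
    case False
    have "\<bar>p\<bar> / M \<le> \<bar>p\<bar> / a" using assms by (intro divide_left_mono) auto
    then show ?thesis using False assms M by (simp add: zeta_cases abs_div)
  qed
  then have "\<bar>p / M\<bar>^(2*r) \<le> \<bar>zeta a b p\<bar>^(2*r)" by (intro power_mono) auto
  moreover have e1: "\<bar>p / M\<bar>^(2*r) = (p / M)^(2*r)" by (rule power_even_abs) simp
  moreover have e2: "\<bar>zeta a b p\<bar>^(2*r) = (zeta a b p)^(2*r)" by (rule power_even_abs) simp
  ultimately show ?thesis by linarith
qed

lemma digam_bound: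
  assumes "a \<ge> cm" "b \<ge> cm" "cm > 0" "- a < p" "p < b" "\<mu> > 0" "zeta a b p ^ (2*r) \<le> 1 - \<mu>"
  shows "\<bar>digam r a b p\<bar> \<le> 1 / (cm^(2*r) * \<mu>)"
proof -
  have key: "\<bar>1 / (c^(2*r) - p^(2*r))\<bar> \<le> 1 / (cm^(2*r) * \<mu>)"
    if c: "c \<ge> cm" "(p/c)^(2*r) \<le> 1 - \<mu>" for c
  proof -
    have cp: "c > 0" using c assms by simp
    have e: "c^(2*r) - p^(2*r) = c^(2*r) * (1 - (p/c)^(2*r))" using cp by (simp add: power_divide field_simps)
    have m1: "c^(2*r) \<ge> cm^(2*r)" using c assms by (intro power_mono) auto
    have m2: "1 - (p/c)^(2*r) \<ge> \<mu>" using c by simp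
    have "cm^(2*r) * \<mu> \<le> c^(2*r) * (1 - (p/c)^(2*r))"
      by (rule mult_mono[OF m1 m2]) (use cp assms in auto)
    then have ge: "c^(2*r) - p^(2*r) \<ge> cm^(2*r) * \<mu>" using e by simp
    have pos: "cm^(2*r) * \<mu> > 0" using assms by simp
    then have xp: "c^(2*r) - p^(2*r) > 0" using ge by linarith
    have "1 / (c^(2*r) - p^(2*r)) \<le> 1 / (cm^(2*r) * \<mu>)"
      by (rule divide_left_mono[OF ge]) (use xp pos in auto)
    moreover have "\<bar>1 / (c^(2*r) - p^(2*r))\<bar> = 1 / (c^(2*r) - p^(2*r))" using xp by simp
    ultimately show ?thesis by simp
  qed
  show ?thesis
  proof (cases "p > 0")
    case True
    have "digam r a b p = 1 / (b^(2*r) - p^(2*r))" using True by (simp add: digam_cases)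
    moreover have "(p/b)^(2*r) \<le> 1 - \<mu>" using True assms(7) by (simp add: zeta_cases)
    ultimately show ?thesis using key[of b] assms(2) by simp
  next
    case False
    have "digam r a b p = 1 / (a^(2*r) - p^(2*r))" using False by (simp add: digam_cases)
    moreover have "(p/a)^(2*r) \<le> 1 - \<mu>" using False assms(7) by (simp add: zeta_cases)
    ultimately show ?thesis using key[of a] assms(1) by simp
  qed
qed



theorem theorem4:
  fixes n r \<gamma> :: nat
    and f g :: "nat \<Rightarrow> (nat \<Rightarrow> real) \<Rightarrow> real"
    and glo ghi :: "nat \<Rightarrow> real"
    and umin umax p1 p2 \<delta> :: real
    and k :: "nat \<Rightarrow> real"
    and ylo yhi yd :: "real \<Rightarrow> real"
    and \<alpha>lo \<alpha>hi \<beta>lo \<beta>hi :: real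
    and x :: "real \<Rightarrow> nat \<Rightarrow> real"
    and u :: "real \<Rightarrow> real"
  defines "\<phi> \<equiv> (\<lambda>j t. x t j - eta f g k r \<delta> yd ylo yhi x (j - 1) t)"
    and "\<rho> \<equiv> (\<lambda>t. u t - eta f g k r \<delta> yd ylo yhi x n t)"
    and "\<zeta> \<equiv> (\<lambda>t. zeta (yd t - ylo t) (yhi t - yd t) (x t 1 - yd t))"
    and "uc \<equiv> (\<lambda>t. (p1 * p2 * u t + tder (eta f g k r \<delta> yd ylo yhi x n) t - g n (x t) * (x t n - eta f g k r \<delta> yd ylo yhi x (n - 1) t) - k (n + 1) * (u t - eta f g k r \<delta> yd ylo yhi x n t))
                    / (p1 * satG umin umax \<gamma> (u t)))"
    and "W \<equiv> (\<lambda>t. 1 / (2 * real r) * ln (1 / (1 - (zeta (yd t - ylo t) (yhi t - yd t) (x t 1 - yd t)) ^ (2 * r)))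
                  + 1/2 * (\<Sum>j=2..n. (x t j - eta f g k r \<delta> yd ylo yhi x (j - 1) t)^2) + 1/2 * (u t - eta f g k r \<delta> yd ylo yhi x n t)^2)"
  assumes n2: "n \<ge> 2"
    and smooth: "\<forall>i\<in>{1..n}. smooth_fun i (f i) \<and> smooth_fun i (g i)"
    and gbnd: "\<forall>i\<in>{1..n}. 0 < glo i \<and> glo i \<le> ghi i \<and> (\<forall>z. glo i \<le> \<bar>g i z\<bar> \<and> \<bar>g i z\<bar> \<le> ghi i)"
    and sat: "umin < 0" "0 < umax" "p1 > 0" "p2 > 0" "even \<gamma>" "\<gamma> > 0"
    and ycont: "continuous_on {0..} ylo" "continuous_on {0..} yhi"
    and yorder: "\<forall>t\<ge>0. ylo t < yhi t"
    and ybdd: "bdd_derivs (n + 1) ylo" "bdd_derivs (n + 1) yhi" "bdd_derivs (n + 1) yd"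
    and ydin: "\<forall>t\<ge>0. ylo t < yd t \<and> yd t < yhi t"
    and abnd: "0 < \<alpha>lo" "\<forall>t\<ge>0. \<alpha>lo \<le> yd t - ylo t \<and> yd t - ylo t \<le> \<alpha>hi"
    and bbnd: "0 < \<beta>lo" "\<forall>t\<ge>0. \<beta>lo \<le> yhi t - yd t \<and> yhi t - yd t \<le> \<beta>hi"
    and rn: "2 * r \<ge> n"
    and kpos: "\<forall>i\<in>{1..n+1}. k i > 0"
    and dpos: "\<delta> > 0"
    and plant: "\<forall>t\<ge>0. \<forall>i\<in>{1..<n}.
                  ((\<lambda>s. x s i) has_real_derivative (f i (x t) + g i (x t) * x t (i + 1))) (at t within {0..})"
    and plant_n: "\<forall>t\<ge>0. ((\<lambda>s. x s n) has_real_derivative (f n (x t) + g n (x t) * u t)) (at t within {0..})"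
    and actuator: "\<forall>t\<ge>0. (u has_real_derivative (p1 * satG umin umax \<gamma> (u t) * uc t - p1 * p2 * u t)) (at t within {0..})"
    and u0: "u 0 = 0"
    and init: "ylo 0 < x 0 1" "x 0 1 < yhi 0"
    and eta_diff: "\<forall>i\<in>{1..n}. \<forall>t\<ge>0. eta f g k r \<delta> yd ylo yhi x i differentiable (at t within {0..})"
  shows "(\<forall>t\<ge>0. ylo t < x t 1 \<and> x t 1 < yhi t)
       \<and> (\<forall>t\<ge>0. \<exists>W'. (W has_real_derivative W') (at t within {0..}) \<and>
            W' \<le> - k 1 * \<zeta> t ^ (2 * r) / (1 - \<zeta> t ^ (2 * r))
                 - (\<Sum>j=2..n. k j * (\<phi> j t)^2) - k (n + 1) * (\<rho> t)^2)
       \<and> (\<forall>j\<in>{1..n}. ((\<lambda>t. \<phi> j t) \<longlongrightarrow> 0) at_top)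
       \<and> (\<rho> \<longlongrightarrow> 0) at_top"
proof -
  define E where "E = eta f g k r \<delta> yd ylo yhi x"
  define \<alpha> where "\<alpha> = (\<lambda>s. yd s - ylo s)"
  define \<beta> where "\<beta> = (\<lambda>s. yhi s - yd s)"
  have r1: "r \<ge> 1" using rn n2 by simp
  have phE: "\<And>j t. \<phi> j t = x t j - E (j - 1) t" unfolding \<phi>_def E_def by simp
  have rhoE: "\<And>t. \<rho> t = u t - E n t" unfolding \<rho>_def E_def by simp
  have E0: "E 0 = yd" unfolding E_def by simp
  have ph1: "\<And>t. \<phi> 1 t = x t 1 - yd t" using phE E0 by simp
  obtain Dd where Dd0: "Dd 0 = yd" and Ddd: "\<forall>m<n+1. \<forall>t\<ge>0. (Dd m has_real_derivative Dd (Suc m) t) (at t within {0..})"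
      and Ddb: "\<forall>m\<le>n+1. \<exists>B. \<forall>t\<ge>0. \<bar>Dd m t\<bar> \<le> B"
    using ybdd(3) unfolding bdd_derivs_def by blast
  obtain Dl where Dl0: "Dl 0 = ylo" and Dld: "\<forall>m<n+1. \<forall>t\<ge>0. (Dl m has_real_derivative Dl (Suc m) t) (at t within {0..})"
      and Dlb: "\<forall>m\<le>n+1. \<exists>B. \<forall>t\<ge>0. \<bar>Dl m t\<bar> \<le> B"
    using ybdd(1) unfolding bdd_derivs_def by blast
  obtain Dh where Dh0: "Dh 0 = yhi" and Dhd: "\<forall>m<n+1. \<forall>t\<ge>0. (Dh m has_real_derivative Dh (Suc m) t) (at t within {0..})"
      and Dhb: "\<forall>m\<le>n+1. \<exists>B. \<forall>t\<ge>0. \<bar>Dh m t\<bar> \<le> B"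
    using ybdd(2) unfolding bdd_derivs_def by blast
  have dyd: "\<And>t. t \<ge> 0 \<Longrightarrow> (yd has_real_derivative Dd 1 t) (at t within {0..})"
    using Ddd Dd0 by (metis One_nat_def add_gr_0 zero_less_one)
  have dylo: "\<And>t. t \<ge> 0 \<Longrightarrow> (ylo has_real_derivative Dl 1 t) (at t within {0..})"
    using Dld Dl0 by (metis One_nat_def add_gr_0 zero_less_one)
  have dyhi: "\<And>t. t \<ge> 0 \<Longrightarrow> (yhi has_real_derivative Dh 1 t) (at t within {0..})"
    using Dhd Dh0 by (metis One_nat_def add_gr_0 zero_less_one)
  have bDd: "bd (Dd 1)" "bd (Dl 1)" "bd (Dh 1)"
    using Ddb[rule_format, of 1] Dlb[rule_format, of 1] Dhb[rule_format, of 1] by (auto simp: bd_def)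
  have d\<alpha>: "\<And>t. t \<ge> 0 \<Longrightarrow> (\<alpha> has_real_derivative Dd 1 t - Dl 1 t) (at t within {0..})"
    unfolding \<alpha>_def using dyd dylo by (auto intro!: derivative_eq_intros)
  have d\<beta>: "\<And>t. t \<ge> 0 \<Longrightarrow> (\<beta> has_real_derivative Dh 1 t - Dd 1 t) (at t within {0..})"
    unfolding \<beta>_def using dyd dyhi by (auto intro!: derivative_eq_intros)
  have t\<alpha>: "\<And>t. t \<ge> 0 \<Longrightarrow> tder \<alpha> t = Dd 1 t - Dl 1 t" using tder_eq d\<alpha> by blast
  have t\<beta>: "\<And>t. t \<ge> 0 \<Longrightarrow> tder \<beta> t = Dh 1 t - Dd 1 t" using tder_eq d\<beta> by blast
  have tyd: "\<And>t. t \<ge> 0 \<Longrightarrow> tder yd t = Dd 1 t" using tder_eq dyd by blast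
  have \<alpha>pos: "\<And>t. t \<ge> 0 \<Longrightarrow> \<alpha> t \<ge> \<alpha>lo" and \<alpha>hi: "\<And>t. t \<ge> 0 \<Longrightarrow> \<alpha> t \<le> \<alpha>hi"
    using abnd by (auto simp: \<alpha>_def)
  have \<beta>pos: "\<And>t. t \<ge> 0 \<Longrightarrow> \<beta> t \<ge> \<beta>lo" and \<beta>hi: "\<And>t. t \<ge> 0 \<Longrightarrow> \<beta> t \<le> \<beta>hi"
    using bbnd by (auto simp: \<beta>_def)
  define kb where "kb = (\<lambda>t. sqrt ((tder \<alpha> t / \<alpha> t)^2 + (tder \<beta> t / \<beta> t)^2 + \<delta>))"
  have kba: "\<And>t. kb t \<ge> \<bar>tder \<alpha> t / \<alpha> t\<bar>"
  proof -
    fix t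
    have "(tder \<alpha> t / \<alpha> t)^2 \<le> (tder \<alpha> t / \<alpha> t)^2 + (tder \<beta> t / \<beta> t)^2 + \<delta>"
      using dpos by simp
    then have "sqrt ((tder \<alpha> t / \<alpha> t)^2) \<le> kb t" unfolding kb_def by (rule real_sqrt_le_mono)
    then show "kb t \<ge> \<bar>tder \<alpha> t / \<alpha> t\<bar>" by simp
  qed
  have kbb: "\<And>t. kb t \<ge> \<bar>tder \<beta> t / \<beta> t\<bar>"
  proof -
    fix t
    have "(tder \<beta> t / \<beta> t)^2 \<le> (tder \<alpha> t / \<alpha> t)^2 + (tder \<beta> t / \<beta> t)^2 + \<delta>"
      using dpos by simp
    then have "sqrt ((tder \<beta> t / \<beta> t)^2) \<le> kb t" unfolding kb_def by (rule real_sqrt_le_mono)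
    then show "kb t \<ge> \<bar>tder \<beta> t / \<beta> t\<bar>" by simp
  qed
  have gne: "\<And>i z. i \<in> {1..n} \<Longrightarrow> g i z \<noteq> 0"
    using gbnd by (metis abs_zero not_less)
  have gbd: "\<And>i. i \<in> {1..n} \<Longrightarrow> bd (\<lambda>t. g i (x t))"
    using gbnd unfolding bd_def by blast
  have dE: "\<And>i t. i \<le> n \<Longrightarrow> t \<ge> 0 \<Longrightarrow> (E i has_real_derivative tder (E i) t) (at t within {0..})"
  proof -
    fix i :: nat and t :: real assume i: "i \<le> n" and t: "t \<ge> 0"
    show "(E i has_real_derivative tder (E i) t) (at t within {0..})"
    proof (cases "i = 0")
      case True then show ?thesis using tyd[OF t] dyd[OF t] E0 by simp
    next
      case False
      then have "E i differentiable (at t within {0..})" using eta_diff i t by (auto simp: E_def)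
      then show ?thesis unfolding tder_def
        by (simp add: vector_derivative_works has_real_derivative_iff_has_vector_derivative)
    qed
  qed
  have dx: "\<And>j t. j \<in> {1..<n} \<Longrightarrow> t \<ge> 0 \<Longrightarrow> ((\<lambda>s. x s j) has_real_derivative f j (x t) + g j (x t) * x t (j + 1)) (at t within {0..})"
    using plant by blast
  have dxn: "\<And>t. t \<ge> 0 \<Longrightarrow> ((\<lambda>s. x s n) has_real_derivative f n (x t) + g n (x t) * u t) (at t within {0..})"
    using plant_n by blast
  define cc where "cc = (\<lambda>j t. if j = 2 then digam r (\<alpha> t) (\<beta> t) (\<phi> 1 t) * g 1 (x t) * \<phi> 1 t ^ (2*r - 1)
                               else g (j - 1) (x t) * \<phi> (j - 1) t)"
  have E1: "\<And>t. g 1 (x t) * E 1 t = tder yd t - f 1 (x t) - (k 1 + kb t) * \<phi> 1 t"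
  proof -
    fix t
    have e: "E 1 t = (1 / g 1 (x t)) * (tder yd t - f 1 (x t) - (k 1 + kb t) * (x t 1 - yd t))"
      unfolding E_def kb_def \<alpha>_def \<beta>_def One_nat_def by (simp only: eta.simps Let_def One_nat_def)
    show "g 1 (x t) * E 1 t = tder yd t - f 1 (x t) - (k 1 + kb t) * \<phi> 1 t"
      unfolding e ph1 using gne[of 1] n2 by simp
  qed
  have Ej: "\<And>j t. j \<in> {2..n} \<Longrightarrow> g j (x t) * E j t = tder (E (j - 1)) t - f j (x t) - cc j t - k j * \<phi> j t"
  proof -
    fix j t assume j: "j \<in> {2..n}"
    define i where "i = j - 2"
    have i: "j = Suc (Suc i)" using j unfolding i_def atLeastAtMost_iff by presburger
    have e: "E (Suc (Suc i)) t = (1 / g (Suc (Suc i)) (x t)) * (tder (E (Suc i)) t - f (Suc (Suc i)) (x t) -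
        (if i = 0 then digam r (yd t - ylo t) (yhi t - yd t) (x t (Suc i) - E i t) * g 1 (x t) * (x t (Suc i) - E i t)^(2*r - 1)
               else g (Suc i) (x t) * (x t (Suc i) - E i t))
        - k (Suc (Suc i)) * (x t (Suc (Suc i)) - E (Suc i) t))"
      unfolding E_def by (simp only: eta.simps Let_def)
    have c: "(if i = 0 then digam r (yd t - ylo t) (yhi t - yd t) (x t (Suc i) - E i t) * g 1 (x t) * (x t (Suc i) - E i t)^(2*r - 1)
               else g (Suc i) (x t) * (x t (Suc i) - E i t)) = cc j t"
      unfolding cc_def i using phE[of "Suc i" t] phE[of 1 t]
      by (cases "i = 0") (simp_all add: \<alpha>_def \<beta>_def)
    have "g j (x t) \<noteq> 0" using gne j by auto
    then show "g j (x t) * E j t = tder (E (j - 1)) t - f j (x t) - cc j t - k j * \<phi> j t"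
      using e c phE[of j t] unfolding i by simp
  qed
  have ud: "\<And>t. t \<ge> 0 \<Longrightarrow> (u has_real_derivative (p1 * satG umin umax \<gamma> (u t) * uc t - p1 * p2 * u t)) (at t within {0..})"
    using actuator by blast
  have ucont: "continuous_on {0..} u"
    by (rule DERIV_continuous_on[of _ _ "\<lambda>t. p1 * satG umin umax \<gamma> (u t) * uc t - p1 * p2 * u t"]) (use ud in auto)
  have ub1: "\<forall>t\<ge>0. u t < umax"
  proof (rule stay_below[OF ucont])
    show "u 0 < umax" using u0 sat by simp
    fix t :: real assume "t \<ge> 0" "u t = umax"
    then show "\<exists>D<0. (u has_real_derivative D) (at t within {0..})"
      using ud[of t] satG_max[of umax \<gamma> umin] sat by (intro exI[of _ "- p1 * p2 * umax"]) auto
  qed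
  have ub2: "\<forall>t\<ge>0. - u t < - umin"
  proof (rule stay_below)
    show "continuous_on {0..} (\<lambda>t. - u t)" using ucont by (intro continuous_intros)
    show "- u 0 < - umin" using u0 sat by simp
    fix t :: real assume "t \<ge> 0" "- u t = - umin"
    then have "u t = umin" by simp
    then show "\<exists>D<0. ((\<lambda>t. - u t) has_real_derivative D) (at t within {0..})"
      using DERIV_minus[OF ud[OF \<open>t \<ge> 0\<close>]] satG_min[of umin \<gamma> umax] sat
      by (intro exI[of _ "p1 * p2 * umin"]) (auto simp: mult_pos_neg)
  qed
  have Gpos: "\<And>t. t \<ge> 0 \<Longrightarrow> satG umin umax \<gamma> (u t) > 0"
    using ub1 ub2 sat by (intro satG_pos) auto
  have ucE: "\<And>t. uc t = (p1 * p2 * u t + tder (E n) t - g n (x t) * \<phi> n t - k (n + 1) * \<rho> t) / (p1 * satG umin umax \<gamma> (u t))"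
    unfolding uc_def E_def phE rhoE by simp
  have drho: "\<And>t. t \<ge> 0 \<Longrightarrow> (\<rho> has_real_derivative - g n (x t) * \<phi> n t - k (n + 1) * \<rho> t) (at t within {0..})"
  proof -
    fix t :: real assume t: "t \<ge> 0"
    have "p1 * satG umin umax \<gamma> (u t) \<noteq> 0" using Gpos[OF t] sat by simp
    then have eq: "p1 * satG umin umax \<gamma> (u t) * uc t - p1 * p2 * u t - tder (E n) t = - g n (x t) * \<phi> n t - k (n + 1) * \<rho> t"
      unfolding ucE by (simp add: field_simps)
    have "\<rho> = (\<lambda>s. u s - E n s)" using rhoE by auto
    then show "(\<rho> has_real_derivative - g n (x t) * \<phi> n t - k (n + 1) * \<rho> t) (at t within {0..})"
      using DERIV_diff[OF ud[OF t] dE[OF order_refl t]] eq by simp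
  qed
  define ph where "ph = (\<lambda>j t. if j = n + 1 then \<rho> t else \<phi> j t)"
  define phd where "phd = (\<lambda>j t. if j = 1 then g 1 (x t) * \<phi> 2 t - (k 1 + kb t) * \<phi> 1 t
                                 else g j (x t) * ph (j + 1) t - cc j t - k j * \<phi> j t)"
  have dphi: "\<And>j t. j \<in> {1..n} \<Longrightarrow> t \<ge> 0 \<Longrightarrow> ((\<lambda>s. \<phi> j s) has_real_derivative phd j t) (at t within {0..})"
  proof -
    fix j :: nat and t :: real assume j: "j \<in> {1..n}" and t: "t \<ge> 0"
    have fe: "(\<lambda>s. \<phi> j s) = (\<lambda>s. x s j - E (j - 1) s)" using phE by auto
    have dEj: "(E (j - 1) has_real_derivative tder (E (j - 1)) t) (at t within {0..})"
      by (rule dE[OF _ t]) (use j in auto)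
    show "((\<lambda>s. \<phi> j s) has_real_derivative phd j t) (at t within {0..})"
    proof (cases "j < n")
      case True
      have xj: "x t (j + 1) = \<phi> (j + 1) t + E j t" using phE[of "j + 1" t] by simp
      have D: "((\<lambda>s. \<phi> j s) has_real_derivative f j (x t) + g j (x t) * x t (j + 1) - tder (E (j - 1)) t) (at t within {0..})"
        unfolding fe using DERIV_diff[OF dx[of j t] dEj] j True t by simp
      show ?thesis
      proof (cases "j = 1")
        case True
        have "f j (x t) + g j (x t) * x t (j + 1) - tder (E (j - 1)) t = phd j t"
          using E1[of t] E0 True unfolding xj phd_def by (simp add: algebra_simps numeral_2_eq_2)
        then show ?thesis using D by simp
      next
        case False
        then have j2: "j \<in> {2..n}" using j by auto
        have "f j (x t) + g j (x t) * x t (j + 1) - tder (E (j - 1)) t = phd j t"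
          using Ej[OF j2, of t] False \<open>j < n\<close> unfolding xj phd_def ph_def by (simp add: algebra_simps)
        then show ?thesis using D by simp
      qed
    next
      case False
      then have jn: "j = n" using j by auto
      have un: "u t = \<rho> t + E n t" using rhoE[of t] by simp
      have D: "((\<lambda>s. \<phi> j s) has_real_derivative f n (x t) + g n (x t) * u t - tder (E (n - 1)) t) (at t within {0..})"
      proof -
        have fe': "\<phi> n = (\<lambda>s. x s n - E (n - 1) s)" using phE by auto
        show ?thesis unfolding jn fe' using DERIV_diff[OF dxn[OF t] dEj[unfolded jn]] by simp
      qed
      have n1: "n \<noteq> 1" using n2 by simp
      have "f n (x t) + g n (x t) * u t - tder (E (n - 1)) t = phd j t"
        using Ej[of n t] n2 n1 unfolding un phd_def ph_def jn by (simp add: algebra_simps)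
      then show ?thesis using D by simp
    qed
  qed
  define Z where "Z = (\<lambda>t. zeta (\<alpha> t) (\<beta> t) (\<phi> 1 t) ^ (2*r))"
  have zetaE: "\<And>t. \<zeta> t = zeta (\<alpha> t) (\<beta> t) (\<phi> 1 t)" unfolding \<zeta>_def \<alpha>_def \<beta>_def ph1 by simp
  define RHS where "RHS = (\<lambda>t. - k 1 * \<zeta> t ^ (2 * r) / (1 - \<zeta> t ^ (2 * r))
                 - (\<Sum>j=2..n. k j * (\<phi> j t)^2) - k (n + 1) * (\<rho> t)^2)"
  define W1 where "W1 = (\<lambda>t. 1/(2*real r) * ln (1/(1 - Z t)))"
  have WE: "W = (\<lambda>t. W1 t + 1/2 * (\<Sum>j=2..n. (\<phi> j t)^2) + 1/2 * (\<rho> t)^2)"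
    unfolding W_def W1_def Z_def \<phi>_def \<rho>_def \<alpha>_def \<beta>_def by simp
  define inside where "inside = (\<lambda>t. - \<alpha> t < \<phi> 1 t \<and> \<phi> 1 t < \<beta> t)"
  have inside_iff: "\<And>t. inside t \<longleftrightarrow> ylo t < x t 1 \<and> x t 1 < yhi t"
    unfolding inside_def \<alpha>_def \<beta>_def ph1 by auto
  have dsum: "\<And>t. t \<ge> 0 \<Longrightarrow> ((\<lambda>s. 1/2 * (\<Sum>j=2..n. (\<phi> j s)^2)) has_real_derivative (\<Sum>j=2..n. \<phi> j t * phd j t)) (at t within {0..})"
  proof -
    fix t :: real assume t: "t \<ge> 0"
    have "\<And>j. j \<in> {2..n} \<Longrightarrow> ((\<lambda>s. (\<phi> j s)^2) has_real_derivative 2 * (\<phi> j t * phd j t)) (at t within {0..})"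
    proof -
      fix j :: nat assume "j \<in> {2..n}"
      then have "j \<in> {1..n}" by auto
      from DERIV_power[OF dphi[OF this t], of 2] show "((\<lambda>s. (\<phi> j s)^2) has_real_derivative 2 * (\<phi> j t * phd j t)) (at t within {0..})"
        by (simp add: algebra_simps)
    qed
    then have "((\<lambda>s. \<Sum>j=2..n. (\<phi> j s)^2) has_real_derivative (\<Sum>j=2..n. 2 * (\<phi> j t * phd j t))) (at t within {0..})"
      by (rule DERIV_sum)
    from DERIV_cmult[OF this, where c="1/2"]
    show "((\<lambda>s. 1/2 * (\<Sum>j=2..n. (\<phi> j s)^2)) has_real_derivative (\<Sum>j=2..n. \<phi> j t * phd j t)) (at t within {0..})"
      by (simp add: sum_distrib_left)
  qed
  have sumE: "\<And>t. (\<Sum>j=2..n. \<phi> j t * phd j t) = g n (x t) * \<phi> n t * \<rho> t - \<phi> 2 t * cc 2 t - (\<Sum>j=2..n. k j * (\<phi> j t)^2)"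
  proof -
    fix t
    define Q where "Q = (\<lambda>j. g j (x t) * \<phi> j t * ph (j + 1) t)"
    have "\<And>j. j \<in> {2..n} \<Longrightarrow> \<phi> j t * phd j t = (Q j - (if j = 2 then \<phi> 2 t * cc 2 t else Q (j - 1))) - k j * (\<phi> j t)^2"
    proof -
      fix j :: nat assume j: "j \<in> {2..n}"
      show "\<phi> j t * phd j t = (Q j - (if j = 2 then \<phi> 2 t * cc 2 t else Q (j - 1))) - k j * (\<phi> j t)^2"
      proof (cases "j = 2")
        case True then show ?thesis by (simp add: phd_def Q_def power2_eq_square algebra_simps eval_nat_numeral)
      next
        case False
        then have "j - 1 + 1 = j" "j \<noteq> n + 1" "j \<noteq> 1" "j \<noteq> 2" using j by auto
        then show ?thesis by (simp add: phd_def Q_def cc_def ph_def power2_eq_square algebra_simps)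
      qed
    qed
    then have "(\<Sum>j=2..n. \<phi> j t * phd j t) = (\<Sum>j=2..n. (Q j - (if j = 2 then \<phi> 2 t * cc 2 t else Q (j - 1))) - k j * (\<phi> j t)^2)"
      by (rule sum.cong[OF refl])
    also have "\<dots> = (\<Sum>j=2..n. (Q j - (if j = 2 then \<phi> 2 t * cc 2 t else Q (j - 1)))) - (\<Sum>j=2..n. k j * (\<phi> j t)^2)"
      by (rule sum_subtractf)
    also have "\<dots> = (Q n - \<phi> 2 t * cc 2 t) - (\<Sum>j=2..n. k j * (\<phi> j t)^2)"
      by (simp only: telescope[OF n2])
    finally show "(\<Sum>j=2..n. \<phi> j t * phd j t) = g n (x t) * \<phi> n t * \<rho> t - \<phi> 2 t * cc 2 t - (\<Sum>j=2..n. k j * (\<phi> j t)^2)"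
      by (simp add: Q_def ph_def)
  qed
  have key: "\<And>t. t \<ge> 0 \<Longrightarrow> inside t \<Longrightarrow> \<exists>W'. (W has_real_derivative W') (at t within {0..}) \<and> W' \<le> RHS t"
  proof -
    fix t :: real assume t: "t \<ge> 0" and ins: "inside t"
    have apos: "\<alpha> t > 0" using \<alpha>pos[OF t] abnd by linarith
    have bpos: "\<beta> t > 0" using \<beta>pos[OF t] bbnd by linarith
    have d1: "((\<lambda>s. \<phi> 1 s) has_real_derivative phd 1 t) (at t within {0..})" using dphi[OF _ t, of 1] n2 by simp
    have da: "(\<alpha> has_real_derivative tder \<alpha> t) (at t within {0..})" using d\<alpha>[OF t] t\<alpha>[OF t] by simp
    have db: "(\<beta> has_real_derivative tder \<beta> t) (at t within {0..})" using d\<beta>[OF t] t\<beta>[OF t] by simp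
    have pd: "phd 1 t = g 1 (x t) * \<phi> 2 t - (k 1 + kb t) * \<phi> 1 t" by (simp add: phd_def)
    obtain D1 where D1: "((\<lambda>s. 1/(2*real r) * ln (1/(1 - zeta (\<alpha> s) (\<beta> s) (\<phi> 1 s) ^ (2*r)))) has_real_derivative D1) (at t within {0..})"
      and D1le: "D1 \<le> digam r (\<alpha> t) (\<beta> t) (\<phi> 1 t) * (g 1 (x t) * \<phi> 2 t) * \<phi> 1 t ^ (2*r - 1)
                  - k 1 * zeta (\<alpha> t) (\<beta> t) (\<phi> 1 t) ^ (2*r) / (1 - zeta (\<alpha> t) (\<beta> t) (\<phi> 1 t) ^ (2*r))"
      using W1_deriv[OF d1 da db apos bpos _ _ r1 pd kba kbb] ins unfolding inside_def by blast
    have dW1: "(W1 has_real_derivative D1) (at t within {0..})" using D1 unfolding W1_def Z_def .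
    have drho2: "((\<lambda>s. 1/2 * (\<rho> s)^2) has_real_derivative \<rho> t * (- g n (x t) * \<phi> n t - k (n + 1) * \<rho> t)) (at t within {0..})"
      using DERIV_cmult[OF DERIV_power[OF drho[OF t], of 2], where c="1/2"] by (simp add: mult.commute)
    have dW: "(W has_real_derivative D1 + (\<Sum>j=2..n. \<phi> j t * phd j t) + \<rho> t * (- g n (x t) * \<phi> n t - k (n + 1) * \<rho> t)) (at t within {0..})"
      unfolding WE by (intro DERIV_add dW1 dsum[OF t] drho2)
    have "D1 + (\<Sum>j=2..n. \<phi> j t * phd j t) + \<rho> t * (- g n (x t) * \<phi> n t - k (n + 1) * \<rho> t) \<le> RHS t"
      using D1le unfolding sumE RHS_def zetaE by (simp add: cc_def power2_eq_square algebra_simps)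
    then show "\<exists>W'. (W has_real_derivative W') (at t within {0..}) \<and> W' \<le> RHS t" using dW by blast
  qed
  define Wd where "Wd = (\<lambda>t. SOME W'. (W has_real_derivative W') (at t within {0..}) \<and> W' \<le> RHS t)"
  have Wd: "\<And>t. t \<ge> 0 \<Longrightarrow> inside t \<Longrightarrow> (W has_real_derivative Wd t) (at t within {0..}) \<and> Wd t \<le> RHS t"
    unfolding Wd_def by (rule someI_ex) (rule key)
  have apos: "\<And>t. t \<ge> 0 \<Longrightarrow> \<alpha> t > 0" using \<alpha>pos abnd by (meson less_le_trans)
  have bpos: "\<And>t. t \<ge> 0 \<Longrightarrow> \<beta> t > 0" using \<beta>pos bbnd by (meson less_le_trans)
  have Zin: "\<And>t. t \<ge> 0 \<Longrightarrow> inside t \<Longrightarrow> 0 \<le> Z t \<and> Z t < 1"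
    unfolding Z_def inside_def using zeta_lt1 apos bpos r1 by blast
  have zZ: "\<And>t. \<zeta> t ^ (2*r) = Z t" by (simp add: zetaE Z_def)
  have kj: "\<And>j. j \<in> {1..n+1} \<Longrightarrow> k j > 0" using kpos by blast
  have k1pos: "k 1 > 0" using kj[of 1] by simp
  have kn1: "k (n + 1) > 0" using kj[of "n+1"] by simp
  have sumnn: "\<And>t. (\<Sum>j=2..n. k j * (\<phi> j t)^2) \<ge> 0"
  proof -
    fix t
    have "\<And>j. j \<in> {2..n} \<Longrightarrow> k j * (\<phi> j t)^2 \<ge> 0" using kj by (simp add: less_imp_le)
    then show "(\<Sum>j=2..n. k j * (\<phi> j t)^2) \<ge> 0" by (rule sum_nonneg)
  qed
  have RHS_le: "\<And>t. t \<ge> 0 \<Longrightarrow> inside t \<Longrightarrow> RHS t \<le> - k 1 * Z t - (\<Sum>j=2..n. k j * (\<phi> j t)^2) - k (n + 1) * (\<rho> t)^2"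
  proof -
    fix t :: real assume t: "t \<ge> 0" and ins: "inside t"
    have Z: "0 \<le> Z t" "Z t < 1" using Zin[OF t ins] by auto
    have k1: "k 1 > 0" using kpos n2 by auto
    have "Z t \<le> Z t / (1 - Z t)" using Z by (simp add: le_divide_eq mult_left_le)
    then have "k 1 * Z t \<le> k 1 * (Z t / (1 - Z t))" using k1 by (intro mult_left_mono) auto
    moreover have "- k 1 * Z t / (1 - Z t) = - (k 1 * (Z t / (1 - Z t)))" by simp
    ultimately show "RHS t \<le> - k 1 * Z t - (\<Sum>j=2..n. k j * (\<phi> j t)^2) - k (n + 1) * (\<rho> t)^2"
      unfolding RHS_def zZ by linarith
  qed
  have RHS0: "\<And>t. t \<ge> 0 \<Longrightarrow> inside t \<Longrightarrow> RHS t \<le> 0"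
  proof -
    fix t :: real assume t: "t \<ge> 0" and ins: "inside t"
    have "k 1 * Z t \<ge> 0" using Zin[OF t ins] k1pos by simp
    moreover have "k (n + 1) * (\<rho> t)^2 \<ge> 0" using kn1 by simp
    ultimately show "RHS t \<le> 0" using RHS_le[OF t ins] sumnn[of t] by linarith
  qed
  have W1nn: "\<And>t. t \<ge> 0 \<Longrightarrow> inside t \<Longrightarrow> W1 t \<ge> 0"
  proof -
    fix t :: real assume t: "t \<ge> 0" and ins: "inside t"
    have Z: "0 \<le> Z t" "Z t < 1" using Zin[OF t ins] by auto
    then have "1 \<le> 1 / (1 - Z t)" by (simp add: le_divide_eq)
    then have "ln (1 / (1 - Z t)) \<ge> 0" by simp
    then show "W1 t \<ge> 0" unfolding W1_def by simp
  qed
  have sq_nn: "\<And>t. (\<Sum>j=2..n. (\<phi> j t)^2) \<ge> 0" by (simp add: sum_nonneg)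
  have Wnn: "\<And>t. t \<ge> 0 \<Longrightarrow> inside t \<Longrightarrow> W t \<ge> W1 t + 1/2 * (\<Sum>j=2..n. (\<phi> j t)^2)"
    unfolding WE by simp
  have Wval: "\<And>t. W t = W1 t + 1/2 * (\<Sum>j=2..n. (\<phi> j t)^2) + 1/2 * (\<rho> t)^2" by (simp add: WE)
  have Wnn0: "\<And>t. t \<ge> 0 \<Longrightarrow> inside t \<Longrightarrow> W t \<ge> 0"
  proof -
    fix t :: real assume t: "t \<ge> 0" "inside t"
    show "W t \<ge> 0" using Wnn[OF t] W1nn[OF t] sq_nn[of t] by linarith
  qed
  have Wrho: "\<And>t. t \<ge> 0 \<Longrightarrow> inside t \<Longrightarrow> W t \<ge> 1/2 * (\<rho> t)^2"
  proof -
    fix t :: real assume t: "t \<ge> 0" "inside t"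
    show "W t \<ge> 1/2 * (\<rho> t)^2" using Wval[of t] W1nn[OF t] sq_nn[of t] by linarith
  qed
  have ins0: "inside 0" using init inside_iff by simp
  have Wdec: "\<And>s. 0 \<le> s \<Longrightarrow> (\<And>\<tau>. 0 \<le> \<tau> \<Longrightarrow> \<tau> \<le> s \<Longrightarrow> inside \<tau>) \<Longrightarrow> W s \<le> W 0"
  proof -
    fix s :: real assume s: "0 \<le> s" and ins: "\<And>\<tau>. 0 \<le> \<tau> \<Longrightarrow> \<tau> \<le> s \<Longrightarrow> inside \<tau>"
    have "W s \<le> W 0 - 0 * (s - 0)"
      by (rule lin_decrease[of 0 s W Wd]) (use s ins Wd RHS0 in \<open>auto intro: order_trans\<close>)
    then show "W s \<le> W 0" by simp
  qed
  define \<mu> where "\<mu> = exp (- (2 * real r) * W 0)"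
  have W00: "W 0 \<ge> 0" using Wnn0[OF order_refl ins0] .
  have mu: "\<mu> > 0" "\<mu> \<le> 1" unfolding \<mu>_def using W00 r1 by auto
  have Zb: "\<And>s. 0 \<le> s \<Longrightarrow> inside s \<Longrightarrow> W s \<le> W 0 \<Longrightarrow> Z s \<le> 1 - \<mu>"
  proof -
    fix s :: real assume s: "0 \<le> s" and ins: "inside s" and Ws: "W s \<le> W 0"
    have Z: "0 \<le> Z s" "Z s < 1" using Zin[OF s ins] by auto
    have "W1 s \<le> W 0" using Wnn[OF s ins] sq_nn[of s] Ws by linarith
    then have "ln (1 / (1 - Z s)) \<le> 2 * real r * W 0" using r1 unfolding W1_def by (simp add: field_simps)
    then have "exp (ln (1 / (1 - Z s))) \<le> exp (2 * real r * W 0)" by simp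
    moreover have "exp (ln (1 / (1 - Z s))) = 1 / (1 - Z s)" using Z by (intro exp_ln) simp
    ultimately have "1 / (1 - Z s) \<le> exp (2 * real r * W 0)" by simp
    then have "1 \<le> exp (2 * real r * W 0) * (1 - Z s)" using Z by (simp add: divide_le_eq)
    then have "exp (- (2 * real r * W 0)) * 1 \<le> exp (- (2 * real r * W 0)) * (exp (2 * real r * W 0) * (1 - Z s))"
      by (intro mult_left_mono) auto
    also have "\<dots> = 1 - Z s" by (simp add: exp_minus field_simps)
    finally show "Z s \<le> 1 - \<mu>" unfolding \<mu>_def by simp
  qed
  define \<theta> where "\<theta> = root (2 * r) (1 - \<mu>)"
  have th: "\<theta> \<ge> 0" "\<theta> < 1" "\<theta> ^ (2 * r) = 1 - \<mu>" unfolding \<theta>_def using mu r1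
    by (auto simp: real_root_pow_pos2 real_root_lt_1_iff)
  have cphi1: "continuous_on {0..} (\<lambda>t. \<phi> 1 t)"
    by (rule DERIV_continuous_on[of _ _ "phd 1"]) (use dphi n2 in auto)
  have calpha: "continuous_on {0..} \<alpha>" by (rule DERIV_continuous_on[of _ _ "\<lambda>t. Dd 1 t - Dl 1 t"]) (use d\<alpha> in auto)
  have cbeta: "continuous_on {0..} \<beta>" by (rule DERIV_continuous_on[of _ _ "\<lambda>t. Dh 1 t - Dd 1 t"]) (use d\<beta> in auto)
  define m where "m = (\<lambda>t. min (\<beta> t - \<phi> 1 t) (\<phi> 1 t + \<alpha> t))"
  have m_iff: "\<And>t. m t > 0 \<longleftrightarrow> inside t" unfolding m_def inside_def by auto
  have mcont: "continuous_on {0..} m" unfolding m_def using cphi1 calpha cbeta by (intro continuous_intros)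
  have inv: "\<forall>t\<ge>0. inside t"
  proof -
    have "\<forall>t\<ge>0. m t > 0"
    proof (rule stay_pos[OF mcont])
      show "m 0 > 0" using ins0 m_iff by simp
      fix T :: real assume T: "T > 0" and below: "\<And>s. 0 \<le> s \<Longrightarrow> s < T \<Longrightarrow> m s > 0"
      have insb: "\<And>s. 0 \<le> s \<Longrightarrow> s < T \<Longrightarrow> inside s" using below m_iff by blast
      have bnd: "\<And>s. 0 \<le> s \<Longrightarrow> s < T \<Longrightarrow> \<phi> 1 s \<le> \<theta> * \<beta> s \<and> - \<phi> 1 s \<le> \<theta> * \<alpha> s"
      proof -
        fix s :: real assume s: "0 \<le> s" "s < T"
        have ins: "inside s" using insb s .
        have "W s \<le> W 0" by (rule Wdec) (use s insb in auto)
        then have "Z s \<le> \<theta> ^ (2 * r)" using Zb[OF s(1) ins] th by simp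
        then show "\<phi> 1 s \<le> \<theta> * \<beta> s \<and> - \<phi> 1 s \<le> \<theta> * \<alpha> s"
          using zeta_bound[OF apos[OF s(1)] bpos[OF s(1)] _ _ r1 th(1)] ins unfolding inside_def Z_def by blast
      qed
      have h1: "\<phi> 1 T - \<theta> * \<beta> T \<le> 0"
        by (rule closure_le[OF _ T, of "\<lambda>s. \<phi> 1 s - \<theta> * \<beta> s"]) (use cphi1 cbeta bnd in \<open>auto intro!: continuous_intros\<close>)
      have h2: "- \<phi> 1 T - \<theta> * \<alpha> T \<le> 0"
        by (rule closure_le[OF _ T, of "\<lambda>s. - \<phi> 1 s - \<theta> * \<alpha> s"]) (use cphi1 calpha bnd in \<open>auto intro!: continuous_intros\<close>)
      have "\<theta> * \<beta> T < \<beta> T" using th bpos[of T] T by simp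
      moreover have "\<theta> * \<alpha> T < \<alpha> T" using th apos[of T] T by simp
      ultimately show "m T > 0" using h1 h2 unfolding m_def by simp
    qed
    then show ?thesis using m_iff by blast
  qed
  have insall: "\<And>t. t \<ge> 0 \<Longrightarrow> inside t" using inv by blast
  have c1: "\<forall>t\<ge>0. ylo t < x t 1 \<and> x t 1 < yhi t" using inv inside_iff by blast
  have c2: "\<forall>t\<ge>0. \<exists>W'. (W has_real_derivative W') (at t within {0..}) \<and>
            W' \<le> - k 1 * \<zeta> t ^ (2 * r) / (1 - \<zeta> t ^ (2 * r))
                 - (\<Sum>j=2..n. k j * (\<phi> j t)^2) - k (n + 1) * (\<rho> t)^2"
    using key insall unfolding RHS_def by blast
  have Wle: "\<And>t. t \<ge> 0 \<Longrightarrow> W t \<le> W 0" using Wdec insall by auto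
  have Wdall: "\<And>t. t \<ge> 0 \<Longrightarrow> (W has_real_derivative Wd t) (at t within {0..})" using Wd insall by blast
  have Wdle: "\<And>t. t \<ge> 0 \<Longrightarrow> Wd t \<le> - k 1 * Z t - (\<Sum>j=2..n. k j * (\<phi> j t)^2) - k (n + 1) * (\<rho> t)^2"
    using Wd insall RHS_le by (meson order_trans)
  have Wnnall: "\<And>t. t \<ge> 0 \<Longrightarrow> W t \<ge> 0" using Wnn0 insall by blast
  have Zball: "\<And>t. t \<ge> 0 \<Longrightarrow> Z t \<le> 1 - \<mu>" using Zb insall Wle by blast
  have Zge0: "\<And>t. t \<ge> 0 \<Longrightarrow> Z t \<ge> 0" using Zin insall by blast
  have bd_cong: "\<And>f h. bd f \<Longrightarrow> (\<And>t. t \<ge> 0 \<Longrightarrow> h t = f t) \<Longrightarrow> bd h" by (auto simp: bd_def)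
  have bphi: "\<And>j. j \<in> {2..n} \<Longrightarrow> bd (\<lambda>t. \<phi> j t)"
  proof -
    fix j :: nat assume j: "j \<in> {2..n}"
    have "\<bar>\<phi> j t\<bar> \<le> 1 + 2 * W 0" if t: "t \<ge> 0" for t
    proof -
      have "(\<phi> j t)^2 \<le> (\<Sum>i=2..n. (\<phi> i t)^2)" using j by (intro member_le_sum) auto
      also have "\<dots> \<le> 2 * W 0" using Wnn[OF t insall[OF t]] W1nn[OF t insall[OF t]] Wle[OF t] by linarith
      finally show ?thesis using abs_le_sq[of "\<phi> j t"] by linarith
    qed
    then show "bd (\<lambda>t. \<phi> j t)" unfolding bd_def by blast
  qed
  have brho: "bd \<rho>"
  proof -
    have "\<bar>\<rho> t\<bar> \<le> 1 + 2 * W 0" if t: "t \<ge> 0" for t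
      using Wrho[OF t insall[OF t]] Wle[OF t] abs_le_sq[of "\<rho> t"] by linarith
    then show "bd \<rho>" unfolding bd_def by blast
  qed
  have bphi1: "bd (\<lambda>t. \<phi> 1 t)"
  proof -
    have "\<bar>\<phi> 1 t\<bar> \<le> \<alpha>hi + \<beta>hi" if t: "t \<ge> 0" for t
      using insall[OF t] \<alpha>hi[OF t] \<beta>hi[OF t] apos[OF t] bpos[OF t] unfolding inside_def by linarith
    then show ?thesis unfolding bd_def by blast
  qed
  have bphiall: "\<And>j. j \<in> {1..n} \<Longrightarrow> bd (\<lambda>t. \<phi> j t)"
  proof -
    fix j :: nat assume "j \<in> {1..n}"
    then consider "j = 1" | "j \<in> {2..n}" by fastforce
    then show "bd (\<lambda>t. \<phi> j t)" using bphi1 bphi by cases auto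
  qed
  have bdig: "bd (\<lambda>t. digam r (\<alpha> t) (\<beta> t) (\<phi> 1 t))"
  proof -
    have "\<bar>digam r (\<alpha> t) (\<beta> t) (\<phi> 1 t)\<bar> \<le> 1 / ((min \<alpha>lo \<beta>lo)^(2*r) * \<mu>)" if t: "t \<ge> 0" for t
      using digam_bound[of "min \<alpha>lo \<beta>lo" "\<alpha> t" "\<beta> t" "\<phi> 1 t" \<mu> r] \<alpha>pos[OF t] \<beta>pos[OF t] abnd bbnd
        insall[OF t] mu Zball[OF t] unfolding inside_def Z_def by simp
    then show ?thesis unfolding bd_def by blast
  qed
  have binva: "bd (\<lambda>t. 1 / \<alpha> t)"
  proof -
    have "\<bar>1 / \<alpha> t\<bar> \<le> 1 / \<alpha>lo" if t: "t \<ge> 0" for t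
      using \<alpha>pos[OF t] abnd apos[OF t] by (simp add: frac_le)
    then show ?thesis unfolding bd_def by blast
  qed
  have binvb: "bd (\<lambda>t. 1 / \<beta> t)"
  proof -
    have "\<bar>1 / \<beta> t\<bar> \<le> 1 / \<beta>lo" if t: "t \<ge> 0" for t
      using \<beta>pos[OF t] bbnd bpos[OF t] by (simp add: frac_le)
    then show ?thesis unfolding bd_def by blast
  qed
  have bkb: "bd kb"
  proof (rule bd_cong)
    show "bd (\<lambda>t. sqrt (((Dd 1 t - Dl 1 t) * (1 / \<alpha> t))^2 + ((Dh 1 t - Dd 1 t) * (1 / \<beta> t))^2 + \<delta>))"
      using bDd binva binvb by (intro bd_sqrt bd_add bd_power bd_mult bd_diff bd_const)
    fix t :: real assume t: "t \<ge> 0"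
    show "kb t = sqrt (((Dd 1 t - Dl 1 t) * (1 / \<alpha> t))^2 + ((Dh 1 t - Dd 1 t) * (1 / \<beta> t))^2 + \<delta>)"
      unfolding kb_def t\<alpha>[OF t] t\<beta>[OF t] by simp
  qed
  have g1bd: "bd (\<lambda>t. g 1 (x t))" using gbd[of 1] n2 by simp
  have bcc: "\<And>j. j \<in> {2..n} \<Longrightarrow> bd (cc j)"
  proof -
    fix j :: nat assume j: "j \<in> {2..n}"
    show "bd (cc j)"
    proof (cases "j = 2")
      case True
      then have "cc j = (\<lambda>t. digam r (\<alpha> t) (\<beta> t) (\<phi> 1 t) * g 1 (x t) * \<phi> 1 t ^ (2*r - 1))"
        by (simp add: cc_def fun_eq_iff)
      then show ?thesis using bdig g1bd bphi1 by (simp add: bd_mult bd_power)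
    next
      case False
      then have "cc j = (\<lambda>t. g (j - 1) (x t) * \<phi> (j - 1) t)" by (simp add: cc_def fun_eq_iff)
      moreover have "j - 1 \<in> {2..n}" "j - 1 \<in> {1..n}" using j False by auto
      ultimately show ?thesis using gbd bphi by (simp add: bd_mult)
    qed
  qed
  have bph: "\<And>j. j \<in> {1..n} \<Longrightarrow> bd (ph (j + 1))"
  proof -
    fix j :: nat assume j: "j \<in> {1..n}"
    show "bd (ph (j + 1))"
    proof (cases "j = n")
      case True then show ?thesis using brho by (simp add: ph_def)
    next
      case False
      then have "j + 1 \<in> {2..n}" using j by auto
      then show ?thesis using bphi[of "j + 1"] False by (simp add: ph_def)
    qed
  qed
  have bphd: "\<And>j. j \<in> {1..n} \<Longrightarrow> bd (phd j)"
  proof -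
    fix j :: nat assume j: "j \<in> {1..n}"
    show "bd (phd j)"
    proof (cases "j = 1")
      case True
      then have "phd j = (\<lambda>t. g 1 (x t) * \<phi> 2 t - (k 1 + kb t) * \<phi> 1 t)" by (simp add: phd_def fun_eq_iff)
      moreover have "bd (\<lambda>t. \<phi> 2 t)" using bphi[of 2] n2 by simp
      ultimately show ?thesis using g1bd bkb bphi1 by (simp add: bd_mult bd_diff bd_add bd_const)
    next
      case False
      then have "phd j = (\<lambda>t. g j (x t) * ph (j + 1) t - cc j t - k j * \<phi> j t)" by (simp add: phd_def fun_eq_iff)
      moreover have "j \<in> {2..n}" using j False by auto
      ultimately show ?thesis using gbd[OF j] bph[OF j] bcc bphi by (simp add: bd_mult bd_diff bd_const)
    qed
  qed
  have bdrho: "bd (\<lambda>t. - g n (x t) * \<phi> n t - k (n + 1) * \<rho> t)"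
  proof -
    have "bd (\<lambda>t. \<phi> n t)" using bphi[of n] n2 by simp
    moreover have "n \<in> {1..n}" using n2 by simp
    ultimately have "bd (\<lambda>t. - (g n (x t) * \<phi> n t) - k (n + 1) * \<rho> t)"
      using gbd brho by (intro bd_diff bd_minus bd_mult bd_const) auto
    then show ?thesis by simp
  qed
  have convj: "\<And>j. j \<in> {2..n} \<Longrightarrow> ((\<lambda>t. \<phi> j t) \<longlongrightarrow> 0) at_top"
  proof -
    fix j :: nat assume j: "j \<in> {2..n}"
    have j1: "j \<in> {1..n}" using j by auto
    obtain L where L: "\<forall>s t. s \<ge> 0 \<longrightarrow> t \<ge> 0 \<longrightarrow> \<bar>\<phi> j s - \<phi> j t\<bar> \<le> L * \<bar>s - t\<bar>"
      using bd_lip[of "\<lambda>s. \<phi> j s" "phd j"] dphi[OF j1] bphd[OF j1] by blast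
    show "((\<lambda>t. \<phi> j t) \<longlongrightarrow> 0) at_top"
    proof (rule barbalat[of W Wd "k j" "\<lambda>t. \<phi> j t" 1 L])
      show "k j > 0" using kj j by auto
      fix t :: real assume t: "t \<ge> 0"
      show "(W has_real_derivative Wd t) (at t within {0..})" using Wdall[OF t] .
      show "W t \<ge> 0" using Wnnall[OF t] .
      have "k j * (\<phi> j t)^2 \<le> (\<Sum>i=2..n. k i * (\<phi> i t)^2)"
        using j kj by (intro member_le_sum) (auto simp: less_imp_le)
      moreover have "k 1 * Z t \<ge> 0" using Zge0[OF t] k1pos by simp
      moreover have "k (n + 1) * (\<rho> t)^2 \<ge> 0" using kn1 by simp
      ultimately show "Wd t \<le> - k j * (\<phi> j t)^(2*1)" using Wdle[OF t] by simp
    qed (use L in auto)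
  qed
  have convrho: "(\<rho> \<longlongrightarrow> 0) at_top"
  proof -
    obtain L where L: "\<forall>s t. s \<ge> 0 \<longrightarrow> t \<ge> 0 \<longrightarrow> \<bar>\<rho> s - \<rho> t\<bar> \<le> L * \<bar>s - t\<bar>"
      using bd_lip[of \<rho> "\<lambda>t. - g n (x t) * \<phi> n t - k (n + 1) * \<rho> t"] drho bdrho by blast
    show ?thesis
    proof (rule barbalat[of W Wd "k (n + 1)" \<rho> 1 L])
      show "k (n + 1) > 0" using kn1 .
      fix t :: real assume t: "t \<ge> 0"
      show "(W has_real_derivative Wd t) (at t within {0..})" using Wdall[OF t] .
      show "W t \<ge> 0" using Wnnall[OF t] .
      have "k 1 * Z t \<ge> 0" using Zge0[OF t] k1pos by simp
      then show "Wd t \<le> - k (n + 1) * (\<rho> t)^(2*1)" using Wdle[OF t] sumnn[of t] by simp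
    qed (use L in auto)
  qed
  have conv1: "((\<lambda>t. \<phi> 1 t) \<longlongrightarrow> 0) at_top"
  proof -
    define Mab where "Mab = \<alpha>hi + \<beta>hi"
    have Mab: "Mab > 0" using \<alpha>hi[of 0] \<beta>hi[of 0] apos[of 0] bpos[of 0] by (simp add: Mab_def)
    have j1: "1 \<in> {1..n}" using n2 by simp
    obtain L where L: "\<forall>s t. s \<ge> 0 \<longrightarrow> t \<ge> 0 \<longrightarrow> \<bar>\<phi> 1 s - \<phi> 1 t\<bar> \<le> L * \<bar>s - t\<bar>"
      using bd_lip[of "\<lambda>s. \<phi> 1 s" "phd 1"] dphi[OF j1] bphd[OF j1] by blast
    show ?thesis
    proof (rule barbalat[of W Wd "k 1 / Mab^(2*r)" "\<lambda>t. \<phi> 1 t" r L])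
      show "k 1 / Mab^(2*r) > 0" using k1pos Mab by simp
      fix t :: real assume t: "t \<ge> 0"
      show "(W has_real_derivative Wd t) (at t within {0..})" using Wdall[OF t] .
      show "W t \<ge> 0" using Wnnall[OF t] .
      have "(\<phi> 1 t / Mab)^(2*r) \<le> Z t"
        unfolding Z_def using insall[OF t] apos[OF t] bpos[OF t] \<alpha>hi[OF t] \<beta>hi[OF t]
        by (intro zeta_lower) (auto simp: inside_def Mab_def)
      then have "k 1 * (\<phi> 1 t / Mab)^(2*r) \<le> k 1 * Z t" using k1pos by (intro mult_left_mono) auto
      moreover have "k 1 * (\<phi> 1 t / Mab)^(2*r) = k 1 / Mab^(2*r) * (\<phi> 1 t)^(2*r)"
        by (simp add: power_divide)
      moreover have "k (n + 1) * (\<rho> t)^2 \<ge> 0" using kn1 by simp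
      ultimately show "Wd t \<le> - (k 1 / Mab^(2*r)) * (\<phi> 1 t)^(2*r)" using Wdle[OF t] sumnn[of t] by linarith
    qed (use L in auto)
  qed
  have c3: "\<forall>j\<in>{1..n}. ((\<lambda>t. \<phi> j t) \<longlongrightarrow> 0) at_top"
  proof
    fix j assume "j \<in> {1..n}"
    then consider "j = 1" | "j \<in> {2..n}" by fastforce
    then show "((\<lambda>t. \<phi> j t) \<longlongrightarrow> 0) at_top" using conv1 convj by cases auto
  qed
  show ?thesis using c1 c2 c3 convrho by blast
qed

end
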